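(* Let $d\ge2$, $A\in[0,\infty)^d$ with $A_d=0$, $D=d+\sum_iA_i$, $x^A=\prod_i|x_i|^{A_i}$, $\mathbb{R}^d_*=\{x:x_i>0\text{ whenever }A_i>0\}$, and let $a,b$ satisfy $0\le b-a<1$, $a<\frac{D-2}{2}$; put $p=\frac{2D}{D-2+2(b-a)}$, $n=\frac{2p}{p-2}$, $\alpha=1+a-\frac{bp}{2}$, $\varphi(x)=\frac{1+|x|^{2\alpha}}{2}$, $d\mu_S=\varphi^{-n}|x|^{-bp}x^A\,dx$ on $\mathbb{R}^d_*$, $\Gamma_S(h,f)=\varphi^2|x|^{2(1-\alpha)}\nabla h\cdot\nabla f$, $\Gamma_S(f)=\Gamma_S(f,f)$, $L_Sf=\varphi^{n}|x|^{bp}x^{-A}\,\mathrm{div}(\varphi^{2-n}|x|^{2(1-\alpha)-bp}x^A\nabla f)$. Let $\mathcal A_0=C^\infty_c(\overline{\mathbb{R}^d_*}\setminus\{0\})$, $L^2(S)=L^2(\mathbb{R}^d_*,\mu_S)$, and let $H^1_0(S)$ be the closure of $\mathcal A_0$ with respect to the norm $\|u\|_{H^1_0(S)}=\left(\int u^2d\mu_S+\int\Gamma_S(u)d\mu_S\right)^{1/2}$. If $n>2$, then the constant function $\mathbf 1$ belongs to $H^1_0(S)$ and $\Gamma_S(\mathbf 1)=0$. Moreover, if $n>4$, there exists a sequence $\zeta_k\in\mathcal A_0$ with $\zeta_k\to\mathbf 1$ in $H^1_0(S)$ and $L_S\zeta_k\to0$ in $L^2(S)$.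
   Context: $x^{-A}=1/x^A$ on $\mathbb{R}^d_*$. The measure $\mu_S$ is finite under the stated hypotheses. *)

theory Defs
  imports "HOL-Analysis.Analysis"
begin

definition Rstar :: "real^'n \<Rightarrow> (real^'n) set" where
  "Rstar A = {x. \<forall>i. 0 < A$i \<longrightarrow> 0 < x$i}"

text \<open>x^A = prod |x_i|^(A_i), with the convention t^0 = 1 (Isabelle has 0 powr 0 = 0).\<close>
definition xpow :: "real^'n \<Rightarrow> real^'n \<Rightarrow> real" where
  "xpow A x = (\<Prod>i\<in>UNIV. if A$i = 0 then 1 else \<bar>x$i\<bar> powr (A$i))"

definition DD :: "real^'n \<Rightarrow> real" where
  "DD A = real CARD('n) + (\<Sum>i\<in>UNIV. A$i)"

definition pS :: "real^'n \<Rightarrow> real \<Rightarrow> real \<Rightarrow> real" where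
  "pS A a b = 2 * DD A / (DD A - 2 + 2 * (b - a))"

definition nS :: "real^'n \<Rightarrow> real \<Rightarrow> real \<Rightarrow> real" where
  "nS A a b = 2 * pS A a b / (pS A a b - 2)"

definition alphaS :: "real^'n \<Rightarrow> real \<Rightarrow> real \<Rightarrow> real" where
  "alphaS A a b = 1 + a - b * pS A a b / 2"

definition phiS :: "real^'n \<Rightarrow> real \<Rightarrow> real \<Rightarrow> real^'n \<Rightarrow> real" where
  "phiS A a b x = (1 + norm x powr (2 * alphaS A a b)) / 2"

definition muS :: "real^'n \<Rightarrow> real \<Rightarrow> real \<Rightarrow> (real^'n) measure" where
  "muS A a b = density lebesgue (\<lambda>x. ennreal (indicator (Rstar A) x
      * phiS A a b x powr (- nS A a b) * norm x powr (- b * pS A a b) * xpow A x))"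

definition pderiv :: "'n \<Rightarrow> (real^'n \<Rightarrow> real) \<Rightarrow> real^'n \<Rightarrow> real" where
  "pderiv i f x = frechet_derivative f (at x) (axis i 1)"

fun pderivs :: "'n list \<Rightarrow> (real^'n \<Rightarrow> real) \<Rightarrow> real^'n \<Rightarrow> real" where
  "pderivs [] f = f"
| "pderivs (i # is) f = pderiv i (pderivs is f)"

definition smooth_fun :: "(real^'n \<Rightarrow> real) \<Rightarrow> bool" where
  "smooth_fun f \<longleftrightarrow> (\<forall>is x. pderivs is f differentiable (at x))"

text \<open>A_0 = C_c^infinity(closure(R^d_*) minus {0}), realised as (restrictions of) smooth
  functions on R^d whose support is compact and avoids the origin.\<close>
definition A0 :: "(real^'n \<Rightarrow> real) set" where
  "A0 = {f. smooth_fun f \<and> compact (closure {x. f x \<noteq> 0}) \<and> 0 \<notin> closure {x. f x \<noteq> 0}}"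

definition GammaS :: "real^'n \<Rightarrow> real \<Rightarrow> real \<Rightarrow> (real^'n \<Rightarrow> real) \<Rightarrow> (real^'n \<Rightarrow> real)
    \<Rightarrow> real^'n \<Rightarrow> real" where
  "GammaS A a b h f x = (phiS A a b x)^2 * norm x powr (2 * (1 - alphaS A a b))
      * (\<Sum>i\<in>UNIV. pderiv i h x * pderiv i f x)"

definition LS :: "real^'n \<Rightarrow> real \<Rightarrow> real \<Rightarrow> (real^'n \<Rightarrow> real) \<Rightarrow> real^'n \<Rightarrow> real" where
  "LS A a b f x = phiS A a b x powr (nS A a b) * norm x powr (b * pS A a b) / xpow A x
     * (\<Sum>i\<in>UNIV. pderiv i (\<lambda>y. phiS A a b y powr (2 - nS A a b)
            * norm y powr (2 * (1 - alphaS A a b) - b * pS A a b) * xpow A y * pderiv i f y) x)"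

definition H1sq :: "real^'n \<Rightarrow> real \<Rightarrow> real \<Rightarrow> (real^'n \<Rightarrow> real) \<Rightarrow> ennreal" where
  "H1sq A a b u = (\<integral>\<^sup>+ x. ennreal ((u x)^2 + GammaS A a b u u x) \<partial>muS A a b)"

text \<open>u lies in H^1_0(S) = closure of A_0 (for u smooth, so that the norm makes sense).\<close>
definition H10 :: "real^'n \<Rightarrow> real \<Rightarrow> real \<Rightarrow> (real^'n \<Rightarrow> real) \<Rightarrow> bool" where
  "H10 A a b u \<longleftrightarrow> (\<exists>\<zeta>. (\<forall>k. \<zeta> k \<in> A0) \<and> (\<lambda>k. H1sq A a b (\<lambda>x. \<zeta> k x - u x)) \<longlonglongrightarrow> 0)"

end

theory Submission
  imports Defs "HOL-Real_Asymp.Real_Asymp"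
begin

definition Fm :: "(real \<Rightarrow> real) \<Rightarrow> real \<Rightarrow> real" where
  "Fm p t = (if 0 < t then p (1/t) * exp (-(1/t)) else 0)"

inductive pf :: "(real \<Rightarrow> real) \<Rightarrow> bool" where
  pf_const: "pf (\<lambda>u. c)"
| pf_add: "pf p \<Longrightarrow> pf q \<Longrightarrow> pf (\<lambda>u. p u + q u)"
| pf_mulu: "pf p \<Longrightarrow> pf (\<lambda>u. u * p u)"

lemma pf_scale: "pf p \<Longrightarrow> pf (\<lambda>u. c * p u)"
proof (induction rule: pf.induct)
  case (pf_const d) then show ?case using pf.pf_const[of "c*d"] by simp
next
  case (pf_add p q) then show ?case using pf.pf_add[of "\<lambda>u. c * p u" "\<lambda>u. c * q u"]
    by (simp add: distrib_left)
next
  case (pf_mulu p) then show ?case using pf.pf_mulu[of "\<lambda>u. c * p u"]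
    by (simp add: mult.left_commute)
qed

lemma pf_deriv: "pf p \<Longrightarrow> \<exists>p'. pf p' \<and> (\<forall>u. (p has_real_derivative p' u) (at u))"
proof (induction rule: pf.induct)
  case (pf_const c) then show ?case by (intro exI[of _ "\<lambda>u. 0"]) (auto intro: pf.pf_const)
next
  case (pf_add p q)
  then obtain p' q' where "pf p'" "pf q'" "\<forall>u. (p has_real_derivative p' u) (at u)"
     "\<forall>u. (q has_real_derivative q' u) (at u)" by blast
  then show ?case by (intro exI[of _ "\<lambda>u. p' u + q' u"]) (auto intro: pf.pf_add derivative_intros)
next
  case (pf_mulu p)
  then obtain p' where "pf p'" "\<forall>u. (p has_real_derivative p' u) (at u)" by blast
  then show ?case
    by (intro exI[of _ "\<lambda>u. p u + u * p' u"])
       (auto intro!: pf.pf_add pf.pf_mulu pf_mulu derivative_eq_intros)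
qed

lemma pf_lim: "pf p \<Longrightarrow> ((\<lambda>t. p (1/t) * exp (-(1/t)) / t^m) \<longlongrightarrow> 0) (at_right 0)"
proof (induction arbitrary: m rule: pf.induct)
  case (pf_const c)
  have "((\<lambda>y. c * (y^m / exp y)) \<longlongrightarrow> c * 0) at_top"
    by (intro tendsto_intros tendsto_power_div_exp_0)
  then have "((\<lambda>t. c * ((1/t)^m / exp (1/t))) \<longlongrightarrow> 0) (at_right 0)"
    using filterlim_compose[OF _ filterlim_inverse_at_top_right, of "\<lambda>y. c * (y^m / exp y)"]
    by (simp add: inverse_eq_divide)
  then show ?case by (simp add: exp_minus power_one_over field_simps)
next
  case (pf_add p q)
  from tendsto_add[OF pf_add.IH(1)[of m] pf_add.IH(2)[of m]] show ?case
    by (simp add: add_divide_distrib distrib_right)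
next
  case (pf_mulu p)
  from pf_mulu.IH[of "Suc m"] show ?case
    by (simp add: field_simps)
qed

lemma Fm_deriv:
  assumes "pf p" and dp: "\<And>u. (p has_real_derivative p' u) (at u)"
  shows "(Fm p has_real_derivative Fm (\<lambda>u. u * u * (p u - p' u)) t) (at t)"
proof -
  consider "t > 0" | "t < 0" | "t = 0" by linarith
  then show ?thesis
  proof cases
    case 1
    have "((\<lambda>t. p (1/t) * exp (-(1/t))) has_real_derivative
        p' (1/t) * (- 1 / t^2) * exp (-(1/t)) + p (1/t) * (exp (-(1/t)) * (1/t^2))) (at t)"
      using 1 by (auto intro!: derivative_eq_intros DERIV_chain2[OF dp] simp: power2_eq_square)
    then have "((\<lambda>t. p (1/t) * exp (-(1/t))) has_real_derivative Fm (\<lambda>u. u * u * (p u - p' u)) t) (at t)"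
      using 1 by (simp add: Fm_def field_simps power2_eq_square)
    then show ?thesis
      by (rule has_field_derivative_transform_within_open[where S="{0<..}"]) (use 1 in \<open>auto simp: Fm_def\<close>)
  next
    case 2
    have "((\<lambda>t. 0) has_real_derivative Fm (\<lambda>u. u * u * (p u - p' u)) t) (at t)"
      using 2 by (simp add: Fm_def)
    then show ?thesis
      by (rule has_field_derivative_transform_within_open[where S="{..<0}"]) (use 2 in \<open>auto simp: Fm_def\<close>)
  next
    case 3
    have r: "((\<lambda>y. (Fm p y - Fm p 0) / (y - 0)) \<longlongrightarrow> 0) (at_right 0)"
    proof -
      have "((\<lambda>t. p (1/t) * exp (-(1/t)) / t^1) \<longlongrightarrow> 0) (at_right 0)" by (rule pf_lim[OF assms(1)])
      moreover have "\<forall>\<^sub>F y in at_right 0. p (1/y) * exp (-(1/y)) / y^1 = (Fm p y - Fm p 0) / (y - 0)"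
        using eventually_at_right_real[OF zero_less_one] by eventually_elim (auto simp: Fm_def)
      ultimately show ?thesis by (rule Lim_transform_eventually)
    qed
    have l: "((\<lambda>y. (Fm p y - Fm p 0) / (y - 0)) \<longlongrightarrow> 0) (at_left 0)"
    proof -
      have "\<forall>\<^sub>F y in at_left 0. 0 = (Fm p y - Fm p 0) / (y - 0)"
        using eventually_at_left_real[of "-1" 0, OF neg_less_0_iff_less[THEN iffD2, OF zero_less_one]] by eventually_elim (auto simp: Fm_def)
      then show ?thesis by (rule Lim_transform_eventually[OF tendsto_const])
    qed
    have "Fm (\<lambda>u. u * u * (p u - p' u)) 0 = 0" by (simp add: Fm_def)
    with filterlim_split_at[OF l r] 3 show ?thesis by (simp add: has_field_derivative_iff)
  qed
qed

definition Fset :: "(real \<Rightarrow> real) set" where "Fset = {Fm p | p. pf p}"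

lemma Fset_dclosed: "g \<in> Fset \<Longrightarrow> \<exists>g'\<in>Fset. \<forall>t. (g has_real_derivative g' t) (at t)"
proof -
  assume "g \<in> Fset"
  then obtain p where p: "pf p" "g = Fm p" by (auto simp: Fset_def)
  then obtain p' where p': "pf p'" "\<And>u. (p has_real_derivative p' u) (at u)" using pf_deriv by blast
  have "pf (\<lambda>u. u * (u * (p u + (-1) * p' u)))"
    by (intro pf_mulu pf_add p pf_scale p')
  then have "Fm (\<lambda>u. u * u * (p u - p' u)) \<in> Fset"
    unfolding Fset_def by (auto simp: algebra_simps intro!: exI[of _ "\<lambda>u. u * (u * (p u + (-1) * p' u))"])
  then show ?thesis using Fm_deriv[OF p(1) p'(2)] p(2) by blast
qed

inductive Sm :: "(real^'n \<Rightarrow> real) \<Rightarrow> bool" where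
  Sm_const: "Sm (\<lambda>x. c)"
| Sm_coord: "Sm (\<lambda>x. x$i)"
| Sm_add: "Sm f \<Longrightarrow> Sm g \<Longrightarrow> Sm (\<lambda>x. f x + g x)"
| Sm_mult: "Sm f \<Longrightarrow> Sm g \<Longrightarrow> Sm (\<lambda>x. f x * g x)"
| Sm_comp: "g \<in> Fset \<Longrightarrow> Sm f \<Longrightarrow> Sm (\<lambda>x. g (f x))"

lemma Sm_der: "Sm f \<Longrightarrow> \<exists>f'. (\<forall>x. (f has_derivative f' x) (at x)) \<and> (\<forall>i. Sm (\<lambda>x. f' x (axis i 1)))"
proof (induction rule: Sm.induct)
  case (Sm_const c) then show ?case
    by (intro exI[of _ "\<lambda>x h. 0"]) (auto intro: Sm.Sm_const)
next
  case (Sm_coord j) then show ?case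
  proof (intro exI[of _ "\<lambda>x h. h$j"] conjI allI)
    fix x show "((\<lambda>x. x$j) has_derivative (\<lambda>h. h$j)) (at x)"
      by (rule bounded_linear_imp_has_derivative[OF bounded_linear_vec_nth])
  next
    fix i
    have "(\<lambda>x::real^'a. (axis i (1::real)) $ j) = (\<lambda>x. if j = i then 1 else 0)" by (simp add: axis_def)
    then show "Sm (\<lambda>x::real^'a. (axis i (1::real)) $ j)" using Sm.Sm_const by metis
  qed
next
  case (Sm_add f g)
  then obtain f' g' where "\<forall>x. (f has_derivative f' x) (at x)" "\<forall>i. Sm (\<lambda>x. f' x (axis i 1))"
      "\<forall>x. (g has_derivative g' x) (at x)" "\<forall>i. Sm (\<lambda>x. g' x (axis i 1))" by blast
  then show ?case
    by (intro exI[of _ "\<lambda>x h. f' x h + g' x h"]) (auto intro: has_derivative_add Sm.Sm_add)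
next
  case (Sm_mult f g)
  then obtain f' g' where "\<forall>x. (f has_derivative f' x) (at x)" "\<forall>i. Sm (\<lambda>x. f' x (axis i 1))"
      "\<forall>x. (g has_derivative g' x) (at x)" "\<forall>i. Sm (\<lambda>x. g' x (axis i 1))" by blast
  then show ?case
  proof (intro exI[of _ "\<lambda>x h. f x * g' x h + f' x h * g x"] conjI allI)
    fix x show "((\<lambda>x. f x * g x) has_derivative (\<lambda>h. f x * g' x h + f' x h * g x)) (at x)"
      using has_derivative_mult[OF \<open>\<forall>x. (f has_derivative f' x) (at x)\<close>[rule_format, of x]
          \<open>\<forall>x. (g has_derivative g' x) (at x)\<close>[rule_format, of x]] .
  next
    fix i show "Sm (\<lambda>x. f x * g' x (axis i 1) + f' x (axis i 1) * g x)"
      apply (rule Sm.Sm_add[OF Sm.Sm_mult Sm.Sm_mult]) using Sm_mult.hyps \<open>\<forall>i. Sm (\<lambda>x. f' x (axis i 1))\<close>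
        \<open>\<forall>i. Sm (\<lambda>x. g' x (axis i 1))\<close> by auto
  qed
next
  case (Sm_comp g f)
  then obtain f' where f': "\<forall>x. (f has_derivative f' x) (at x)" "\<forall>i. Sm (\<lambda>x. f' x (axis i 1))" by blast
  obtain g' where g': "g' \<in> Fset" "\<forall>t. (g has_real_derivative g' t) (at t)"
    using Fset_dclosed[OF Sm_comp.hyps(1)] by blast
  show ?case
  proof (intro exI[of _ "\<lambda>x h. f' x h * g' (f x)"] conjI allI)
    fix x show "((\<lambda>x. g (f x)) has_derivative (\<lambda>h. f' x h * g' (f x))) (at x)"
      using DERIV_compose_FDERIV[OF g'(2)[rule_format, of "f x"] f'(1)[rule_format, of x]] .
  next
    fix i show "Sm (\<lambda>x. f' x (axis i 1) * g' (f x))"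
      using Sm.Sm_mult[OF f'(2)[rule_format, of i] Sm.Sm_comp[OF g'(1) Sm_comp.hyps(2)]] .
  qed
qed

lemma Sm_pderiv: "Sm f \<Longrightarrow> Sm (pderiv i f) \<and> (\<forall>x. f differentiable (at x))"
proof -
  assume "Sm f"
  then obtain f' where f': "\<forall>x. (f has_derivative f' x) (at x)" "\<forall>i. Sm (\<lambda>x. f' x (axis i 1))"
    using Sm_der by blast
  have "pderiv i f = (\<lambda>x. f' x (axis i 1))"
    using f'(1) frechet_derivative_at unfolding pderiv_def by metis
  then show ?thesis using f' unfolding differentiable_def by auto
qed

lemma Sm_smooth: "Sm f \<Longrightarrow> smooth_fun f"
proof -
  assume f: "Sm f"
  have "Sm (pderivs is f)" for "is"
  proof (induction "is")
    case Nil then show ?case using f by simp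
  next
    case (Cons i "is") then show ?case using Sm_pderiv[of "pderivs is f" i] by simp
  qed
  then show ?thesis unfolding smooth_fun_def using Sm_pderiv by blast
qed

lemma Sm_sum: "finite I \<Longrightarrow> (\<And>i. i \<in> I \<Longrightarrow> Sm (f i)) \<Longrightarrow> Sm (\<lambda>x. \<Sum>i\<in>I. f i x)"
proof (induction I rule: finite_induct)
  case empty then show ?case using Sm_const[of 0] by simp
next
  case (insert i I) then show ?case using Sm_add[of "f i" "\<lambda>x. \<Sum>i\<in>I. f i x"] by simp
qed

lemma Sm_inner: "Sm (\<lambda>x::real^'n. x \<bullet> x)"
proof -
  have "(\<lambda>x::real^'n. x \<bullet> x) = (\<lambda>x. \<Sum>i\<in>UNIV. x$i * x$i)" by (simp add: inner_vec_def)
  moreover have "Sm (\<lambda>x::real^'n. \<Sum>i\<in>UNIV. x$i * x$i)"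
    by (rule Sm_sum) (auto intro: Sm_mult[OF Sm_coord Sm_coord])
  ultimately show ?thesis by simp
qed

definition "F0 = Fm (\<lambda>u. 1)"
definition "F1 = Fm (\<lambda>u. u*u)"
definition "F2 = Fm (\<lambda>u. u*u*(u*u - 2*u))"

lemma F0_eq: "F0 t = (if 0 < t then exp (-(1/t)) else 0)" by (simp add: F0_def Fm_def)
lemma F1_eq: "F1 t = (if 0 < t then (1/t)^2 * exp (-(1/t)) else 0)" by (simp add: F1_def Fm_def power2_eq_square)
lemma F2_eq: "F2 t = (if 0 < t then ((1/t)^4 - 2*(1/t)^3) * exp (-(1/t)) else 0)"
  by (simp add: F2_def Fm_def power2_eq_square algebra_simps eval_nat_numeral)

lemma F0_deriv: "(F0 has_real_derivative F1 t) (at t)"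
proof -
  have "(Fm (\<lambda>u. 1) has_real_derivative Fm (\<lambda>u. u * u * (1 - 0)) t) (at t)"
    by (rule Fm_deriv) (auto intro: pf_const)
  then show ?thesis by (simp add: F0_def F1_def)
qed

lemma F1_deriv: "(F1 has_real_derivative F2 t) (at t)"
proof -
  have "pf (\<lambda>u. u*u)" using pf_mulu[OF pf_mulu[OF pf_const[of 1]]] by simp
  have "(Fm (\<lambda>u. u*u) has_real_derivative Fm (\<lambda>u. u * u * (u*u - 2*u)) t) (at t)"
    by (rule Fm_deriv[OF \<open>pf (\<lambda>u. u*u)\<close>]) (auto intro!: derivative_eq_intros)
  then show ?thesis by (simp add: F1_def F2_def)
qed

lemma F0_chain[derivative_intros]:
  "(f has_real_derivative f') (at x within S) \<Longrightarrow> ((\<lambda>x. F0 (f x)) has_real_derivative F1 (f x) * f') (at x within S)"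
  using DERIV_chain2[OF F0_deriv] by blast
lemma F1_chain[derivative_intros]:
  "(f has_real_derivative f') (at x within S) \<Longrightarrow> ((\<lambda>x. F1 (f x)) has_real_derivative F2 (f x) * f') (at x within S)"
  using DERIV_chain2[OF F1_deriv] by blast

lemma F0_Fset: "F0 \<in> Fset" unfolding Fset_def F0_def using pf_const by blast

lemma exp_pow_bound: "0 \<le> (y::real) \<Longrightarrow> y^k * exp (-y) \<le> fact k"
proof -
  assume y: "0 \<le> y"
  obtain t where t: "exp y = (\<Sum>m<Suc k. y ^ m / fact m) + exp t / fact (Suc k) * y ^ Suc k"
    using Maclaurin_exp_le[of y "Suc k"] by blast
  have "y^k / fact k \<le> (\<Sum>m<Suc k. y ^ m / fact m)"
    by (rule member_le_sum[of k "{..<Suc k}" "\<lambda>m. y ^ m / fact m"]) (use y in auto)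
  also have "\<dots> \<le> exp y" using t y by simp
  finally have "y^k \<le> fact k * exp y" by (simp add: field_simps)
  then show ?thesis by (simp add: exp_minus field_simps)
qed

lemma F0_nonneg: "0 \<le> F0 t" by (simp add: F0_eq)
lemma F0_le1: "F0 t \<le> 1" by (simp add: F0_eq)
lemma F0_le_e: "t \<le> 1 \<Longrightarrow> exp 1 * F0 t \<le> 1"
proof -
  assume "t \<le> 1"
  show ?thesis
  proof (cases "0 < t")
    case True
    then have "1 \<le> 1/t" using \<open>t \<le> 1\<close> by (simp add: field_simps)
    then have "exp (-(1/t)) \<le> exp (-1)" by simp
    then show ?thesis using True by (simp add: F0_eq exp_minus field_simps)
  qed (simp add: F0_eq)
qed

lemma F1_nonneg: "0 \<le> F1 t" by (simp add: F1_eq)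
lemma F1_le: "F1 t \<le> 2"
  using exp_pow_bound[of "1/t" 2] by (simp add: F1_eq)

lemma F2_abs: "\<bar>F2 t\<bar> \<le> 36"
proof (cases "0 < t")
  case True
  let ?y = "1/t"
  have y: "0 \<le> ?y" using True by simp
  have "\<bar>F2 t\<bar> = \<bar>?y^4 - 2*?y^3\<bar> * exp (-?y)" using True by (simp add: F2_eq abs_mult)
  also have "\<dots> \<le> (?y^4 + 2*?y^3) * exp (-?y)"
    by (rule mult_right_mono) (use zero_le_power[OF y, of 3] zero_le_power[OF y, of 4] in \<open>auto simp: abs_le_iff\<close>)
  also have "\<dots> = ?y^4 * exp (-?y) + 2 * (?y^3 * exp (-?y))" by (simp add: algebra_simps)
  also have "\<dots> \<le> fact 4 + 2 * fact 3"
    using exp_pow_bound[OF y, of 4] exp_pow_bound[OF y, of 3] by linarith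
  finally show ?thesis by (simp add: fact_numeral)
qed (simp add: F2_eq)

lemma tF1_bound: "\<bar>t * F1 (t - 1)\<bar> \<le> 3"
proof (cases "1 < t")
  case True
  define y where "y = 1/(t-1)"
  have y: "0 \<le> y" using True by (simp add: y_def)
  have ty: "t * y = 1 + y" using True by (simp add: y_def field_simps)
  have "\<bar>t * F1 (t - 1)\<bar> = t * (y^2 * exp (-y))" using True by (simp add: F1_eq y_def)
  also have "\<dots> = (t * y) * y * exp (-y)" by (simp add: power2_eq_square)
  also have "\<dots> = y^1 * exp (-y) + y^2 * exp (-y)" unfolding ty by (simp add: algebra_simps power2_eq_square)
  also have "\<dots> \<le> fact 1 + fact 2"
    using exp_pow_bound[OF y, of 1] exp_pow_bound[OF y, of 2] by linarith
  finally show ?thesis by (simp add: fact_numeral)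
qed (simp add: F1_eq)

lemma t2F2_bound: "\<bar>t^2 * F2 (t - 1)\<bar> \<le> 60"
proof (cases "1 < t")
  case True
  define y where "y = 1/(t-1)"
  have y: "0 \<le> y" using True by (simp add: y_def)
  have ty: "t * y = 1 + y" using True by (simp add: y_def field_simps)
  have "\<bar>t^2 * F2 (t - 1)\<bar> = t^2 * \<bar>y^4 - 2*y^3\<bar> * exp (-y)"
    using True by (simp add: F2_eq abs_mult y_def)
  also have "\<dots> \<le> t^2 * (y^4 + 2*y^3) * exp (-y)"
    by (intro mult_right_mono mult_left_mono) (use zero_le_power[OF y, of 3] zero_le_power[OF y, of 4] in \<open>auto simp: abs_le_iff\<close>)
  also have "t^2 * (y^4 + 2*y^3) = (t*y)^2 * (y^2 + 2*y)"
    by (simp add: power2_eq_square eval_nat_numeral algebra_simps)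
  also have "\<dots> = y^4 + 4*y^3 + 5*y^2 + 2*y"
    unfolding ty by (simp add: power2_eq_square eval_nat_numeral algebra_simps)
  also have "(y^4 + 4*y^3 + 5*y^2 + 2*y) * exp (-y)
      = y^4 * exp (-y) + 4*(y^3 * exp (-y)) + 5*(y^2 * exp (-y)) + 2*(y^1 * exp (-y))"
    by (simp add: algebra_simps)
  also have "\<dots> \<le> fact 4 + 4 * fact 3 + 5 * fact 2 + 2 * fact 1"
    using exp_pow_bound[OF y, of 4] exp_pow_bound[OF y, of 3] exp_pow_bound[OF y, of 2]
      exp_pow_bound[OF y, of 1] by linarith
  finally show ?thesis by (simp add: fact_numeral)
qed (simp add: F2_eq)

lemma tF1_lim: "((\<lambda>t. t * F1 (t - 1)) \<longlongrightarrow> 0) at_top"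
proof -
  have "((\<lambda>t::real. t * ((1/(t-1))^2 * exp (-(1/(t-1))))) \<longlongrightarrow> 0) at_top" by real_asymp
  moreover have "\<forall>\<^sub>F t in at_top. t * ((1/(t-1))^2 * exp (-(1/(t-1)))) = t * F1 (t - 1)"
    using eventually_gt_at_top[of 1] by eventually_elim (simp add: F1_eq)
  ultimately show ?thesis by (rule Lim_transform_eventually)
qed

lemma t2F2_lim: "((\<lambda>t. t^2 * F2 (t - 1)) \<longlongrightarrow> 0) at_top"
proof -
  have "((\<lambda>t::real. t^2 * (((1/(t-1))^4 - 2*(1/(t-1))^3) * exp (-(1/(t-1))))) \<longlongrightarrow> 0) at_top" by real_asymp
  moreover have "\<forall>\<^sub>F t in at_top. t^2 * (((1/(t-1))^4 - 2*(1/(t-1))^3) * exp (-(1/(t-1)))) = t^2 * F2 (t - 1)"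
    using eventually_gt_at_top[of 1] by eventually_elim (simp add: F2_eq)
  ultimately show ?thesis by (rule Lim_transform_eventually)
qed

lemma F0_lim_top: "((\<lambda>t. F0 (t - 1)) \<longlongrightarrow> 1) at_top"
proof -
  have "((\<lambda>t::real. exp (-(1/(t-1)))) \<longlongrightarrow> 1) at_top" by real_asymp
  moreover have "\<forall>\<^sub>F t in at_top. exp (-(1/(t-1))) = F0 (t - 1)"
    using eventually_gt_at_top[of 1] by eventually_elim (simp add: F0_eq)
  ultimately show ?thesis by (rule Lim_transform_eventually)
qed

lemma F0_cont: "isCont F0 t" using F0_deriv DERIV_isCont by blast

definition hk :: "real \<Rightarrow> real \<Rightarrow> real" where
  "hk c s = F0 (c * s - 1) * (exp 1 * F0 (1 - s/c))"
definition h1 :: "real \<Rightarrow> real \<Rightarrow> real" where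
  "h1 c s = c * F1 (c * s - 1) * (exp 1 * F0 (1 - s/c)) - F0 (c * s - 1) * (exp 1 * F1 (1 - s/c)) / c"
definition h2 :: "real \<Rightarrow> real \<Rightarrow> real" where
  "h2 c s = c^2 * F2 (c * s - 1) * (exp 1 * F0 (1 - s/c)) - 2 * F1 (c * s - 1) * (exp 1 * F1 (1 - s/c))
     + F0 (c * s - 1) * (exp 1 * F2 (1 - s/c)) / c^2"

lemma hk_deriv: "c \<noteq> 0 \<Longrightarrow> (hk c has_real_derivative h1 c s) (at s)"
  unfolding hk_def h1_def
  apply (rule derivative_eq_intros refl | simp)+ done

lemma h1_deriv: "c \<noteq> 0 \<Longrightarrow> (h1 c has_real_derivative h2 c s) (at s)"
  unfolding h1_def h2_def
  apply (rule derivative_eq_intros refl | assumption)+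
  apply (simp add: power2_eq_square algebra_simps)
  apply (simp add: field_simps)
  done

lemma hk_bounds: "0 \<le> hk c s" "0 < c \<Longrightarrow> 0 \<le> s \<Longrightarrow> hk c s \<le> 1"
proof -
  show "0 \<le> hk c s" unfolding hk_def by (intro mult_nonneg_nonneg F0_nonneg) simp
  assume "0 < c" "0 \<le> s"
  then have "exp 1 * F0 (1 - s/c) \<le> 1" by (intro F0_le_e) simp
  moreover have "0 \<le> exp 1 * F0 (1 - s/c)" by (simp add: F0_nonneg)
  ultimately show "hk c s \<le> 1" unfolding hk_def using F0_le1 F0_nonneg
    by (meson dual_order.trans mult_le_one)
qed

lemma uF1_bound: "0 \<le> u \<Longrightarrow> \<bar>u * F1 (1 - u)\<bar> \<le> 2 * u"
proof (cases "u < 1")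
  case True
  assume "0 \<le> u"
  then show ?thesis using F1_le[of "1-u"] F1_nonneg[of "1-u"]
    by (simp add: abs_mult mult_left_mono mult.commute)
qed (simp add: F1_eq)

lemma u2F2_bound: "0 \<le> u \<Longrightarrow> \<bar>u^2 * F2 (1 - u)\<bar> \<le> 36 * u^2"
proof (cases "u < 1")
  case True
  assume "0 \<le> u"
  then show ?thesis using mult_right_mono[OF F2_abs[of "1-u"] zero_le_power2[of u]]
    by (simp add: abs_mult mult.commute)
qed (simp add: F2_eq)

lemma sh1_eq: "c \<noteq> 0 \<Longrightarrow> s * h1 c s = (c * s) * F1 (c * s - 1) * (exp 1 * F0 (1 - s/c))
    - F0 (c * s - 1) * exp 1 * ((s/c) * F1 (1 - s/c))"
  by (simp add: h1_def field_simps)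

lemma sh2_eq: "c \<noteq> 0 \<Longrightarrow> s^2 * h2 c s = (c * s)^2 * F2 (c * s - 1) * (exp 1 * F0 (1 - s/c))
    - 2 * ((c * s) * F1 (c * s - 1)) * exp 1 * ((s/c) * F1 (1 - s/c))
    + F0 (c * s - 1) * exp 1 * ((s/c)^2 * F2 (1 - s/c))"
  unfolding h2_def power2_eq_square by (simp add: algebra_simps)

lemma e_le3: "exp (1::real) \<le> 3" using exp_le by simp

lemma uF1_bound2: "0 \<le> u \<Longrightarrow> \<bar>u * F1 (1 - u)\<bar> \<le> 2"
proof (cases "u < 1")
  case True
  assume "0 \<le> u"
  then have "u * F1 (1 - u) \<le> 1 * 2" using True F1_le[of "1-u"] F1_nonneg[of "1-u"]
    by (intro mult_mono) auto
  then show ?thesis using \<open>0 \<le> u\<close> F1_nonneg[of "1-u"] by simp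
qed (simp add: F1_eq)

lemma u2F2_bound2: "0 \<le> u \<Longrightarrow> \<bar>u^2 * F2 (1 - u)\<bar> \<le> 36"
proof (cases "u < 1")
  case True
  assume "0 \<le> u"
  have "u^2 \<le> 1" using True \<open>0 \<le> u\<close> by (simp add: abs_square_le_1)
  then have "\<bar>u^2\<bar> * \<bar>F2 (1 - u)\<bar> \<le> 1 * 36" using F2_abs[of "1-u"]
    by (intro mult_mono) auto
  then show ?thesis by (simp add: abs_mult)
qed (simp add: F2_eq)

lemma abs3: "\<bar>x::real\<bar> \<le> X \<Longrightarrow> \<bar>y\<bar> \<le> Y \<Longrightarrow> \<bar>z\<bar> \<le> Z \<Longrightarrow> \<bar>x * y * z\<bar> \<le> X * Y * Z"
proof -
  assume h: "\<bar>x::real\<bar> \<le> X" "\<bar>y\<bar> \<le> Y" "\<bar>z\<bar> \<le> Z"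
  have "\<bar>x\<bar> * \<bar>y\<bar> \<le> X * Y" using h by (intro mult_mono) auto
  moreover have "0 \<le> X * Y" using h by (meson abs_ge_zero order.trans mult_nonneg_nonneg)
  ultimately have "\<bar>x\<bar> * \<bar>y\<bar> * \<bar>z\<bar> \<le> X * Y * Z" using h by (intro mult_mono) auto
  then show ?thesis by (simp add: abs_mult)
qed

lemma abs2: "\<bar>x::real\<bar> \<le> X \<Longrightarrow> \<bar>y\<bar> \<le> Y \<Longrightarrow> \<bar>x * y\<bar> \<le> X * Y"
proof -
  assume h: "\<bar>x::real\<bar> \<le> X" "\<bar>y\<bar> \<le> Y"
  have "\<bar>x\<bar> * \<bar>y\<bar> \<le> X * Y" using h by (intro mult_mono) auto
  then show ?thesis by (simp add: abs_mult)
qed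

lemma G_bounds: "0 < c \<Longrightarrow> 0 \<le> s \<Longrightarrow> \<bar>exp 1 * F0 (1 - s/c)\<bar> \<le> 1"
  using F0_le_e[of "1 - s/c"] F0_nonneg[of "1 - s/c"] by simp

lemma F0_abs: "\<bar>F0 t\<bar> \<le> 1" using F0_le1[of t] F0_nonneg[of t] by simp
lemma e_abs: "\<bar>exp (1::real)\<bar> \<le> 3" using e_le3 by simp

lemma sh1_bound: "1 \<le> c \<Longrightarrow> 0 < s \<Longrightarrow> \<bar>s * h1 c s\<bar> \<le> 9"
proof -
  assume c: "1 \<le> c" and s: "0 < s"
  have cs: "0 < c" "0 \<le> s" "0 \<le> s/c" using c s by auto
  have a: "\<bar>(c * s) * F1 (c * s - 1) * (exp 1 * F0 (1 - s/c))\<bar> \<le> 3 * 1"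
    by (rule abs2[OF tF1_bound[of "c * s"] G_bounds[OF cs(1,2)]])
  have b: "\<bar>F0 (c * s - 1) * exp 1 * ((s/c) * F1 (1 - s/c))\<bar> \<le> 1 * 3 * 2"
    by (rule abs3[OF F0_abs e_abs uF1_bound2[OF cs(3)]])
  have "c \<noteq> 0" using c by simp
  show ?thesis unfolding sh1_eq[OF \<open>c \<noteq> 0\<close>] using a b by linarith
qed

lemma sh2_bound: "1 \<le> c \<Longrightarrow> 0 < s \<Longrightarrow> \<bar>s^2 * h2 c s\<bar> \<le> 250"
proof -
  assume c: "1 \<le> c" and s: "0 < s"
  have cs: "0 < c" "0 \<le> s" "0 \<le> s/c" using c s by auto
  have a: "\<bar>(c * s)^2 * F2 (c * s - 1) * (exp 1 * F0 (1 - s/c))\<bar> \<le> 60 * 1"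
    by (rule abs2[OF t2F2_bound[of "c * s"] G_bounds[OF cs(1,2)]])
  have t2: "\<bar>2 * ((c * s) * F1 (c * s - 1))\<bar> \<le> 6" using tF1_bound[of "c * s"] by simp
  have b: "\<bar>(2 * ((c * s) * F1 (c * s - 1))) * exp 1 * ((s/c) * F1 (1 - s/c))\<bar> \<le> 6 * 3 * 2"
    by (rule abs3[OF t2 e_abs uF1_bound2[OF cs(3)]])
  have d: "\<bar>F0 (c * s - 1) * exp 1 * ((s/c)^2 * F2 (1 - s/c))\<bar> \<le> 1 * 3 * 36"
    by (rule abs3[OF F0_abs e_abs u2F2_bound2[OF cs(3)]])
  have "c \<noteq> 0" using c by simp
  have tri: "\<bar>a - b + d\<bar> \<le> \<bar>a\<bar> + \<bar>b\<bar> + \<bar>d\<bar>" for a b d :: real by linarith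
  show ?thesis unfolding sh2_eq[OF \<open>c \<noteq> 0\<close>]
    by (rule order.trans[OF tri]) (use a b d in linarith)
qed

definition ck :: "nat \<Rightarrow> real" where "ck k = real k + 1"

lemma ck_ge1: "1 \<le> ck k" by (simp add: ck_def)

lemma lims:
  assumes s: "0 < s"
  shows "(\<lambda>k. hk (ck k) s) \<longlonglongrightarrow> 1"
    "(\<lambda>k. s * h1 (ck k) s) \<longlonglongrightarrow> 0"
    "(\<lambda>k. s^2 * h2 (ck k) s) \<longlonglongrightarrow> 0"
proof -
  have "filterlim (\<lambda>k. 1 + real k) at_top sequentially"
    by (rule filterlim_tendsto_add_at_top[OF tendsto_const filterlim_real_sequentially])
  then have L0: "filterlim ck at_top sequentially" unfolding ck_def by (simp add: add.commute)
  have L1: "filterlim (\<lambda>k. ck k * s) at_top sequentially"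
    by (rule filterlim_at_top_mult_tendsto_pos[OF tendsto_const s L0])
  have L2: "(\<lambda>k. s / ck k) \<longlonglongrightarrow> 0"
    by (rule tendsto_divide_0[OF tendsto_const filterlim_at_top_imp_at_infinity[OF L0]])
  have u0: "0 \<le> s / ck k" for k using s ck_ge1[of k] by simp
  have A: "(\<lambda>k. (ck k * s) * F1 (ck k * s - 1)) \<longlonglongrightarrow> 0"
    using filterlim_compose[OF tF1_lim L1] by simp
  have A2: "(\<lambda>k. (ck k * s)^2 * F2 (ck k * s - 1)) \<longlonglongrightarrow> 0"
    using filterlim_compose[OF t2F2_lim L1] by simp
  have B: "(\<lambda>k. F0 (ck k * s - 1)) \<longlonglongrightarrow> 1"
    using filterlim_compose[OF F0_lim_top L1] by simp
  have "(\<lambda>k. F0 (1 - s / ck k)) \<longlonglongrightarrow> F0 (1 - 0)"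
    by (rule isCont_tendsto_compose[OF F0_cont tendsto_diff[OF tendsto_const L2]])
  then have G: "(\<lambda>k. exp 1 * F0 (1 - s / ck k)) \<longlonglongrightarrow> exp 1 * exp (-1)"
    by (intro tendsto_mult tendsto_const) (simp add: F0_eq)
  have U: "(\<lambda>k. (s / ck k) * F1 (1 - s / ck k)) \<longlonglongrightarrow> 0"
  proof (rule Lim_null_comparison)
    show "\<forall>\<^sub>F k in sequentially. norm ((s / ck k) * F1 (1 - s / ck k)) \<le> 2 * (s / ck k)"
      using uF1_bound[OF u0] by simp
    show "(\<lambda>k. 2 * (s / ck k)) \<longlonglongrightarrow> 0" using tendsto_mult[OF tendsto_const L2, of 2] by simp
  qed
  have U2: "(\<lambda>k. (s / ck k)^2 * F2 (1 - s / ck k)) \<longlonglongrightarrow> 0"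
  proof (rule Lim_null_comparison)
    show "\<forall>\<^sub>F k in sequentially. norm ((s / ck k)^2 * F2 (1 - s / ck k)) \<le> 36 * (s / ck k)^2"
      using u2F2_bound[OF u0] by simp
    show "(\<lambda>k. 36 * (s / ck k)^2) \<longlonglongrightarrow> 0" using tendsto_mult[OF tendsto_const tendsto_power[OF L2, of 2], of 36] by simp
  qed
  have e1: "exp (1::real) * exp (-1) = 1" by (simp add: exp_minus)
  have ne: "ck k \<noteq> 0" for k using ck_ge1[of k] by simp
  have "(\<lambda>k. F0 (ck k * s - 1) * (exp 1 * F0 (1 - s / ck k))) \<longlonglongrightarrow> 1 * 1"
    using tendsto_mult[OF B G] e1 by simp
  then show "(\<lambda>k. hk (ck k) s) \<longlonglongrightarrow> 1" by (simp add: hk_def)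
  have "(\<lambda>k. (ck k * s) * F1 (ck k * s - 1) * (exp 1 * F0 (1 - s / ck k))
      - F0 (ck k * s - 1) * exp 1 * ((s / ck k) * F1 (1 - s / ck k))) \<longlonglongrightarrow> 0 * 1 - 1 * exp 1 * 0"
    using A G B U e1 by (intro tendsto_intros) auto
  then show "(\<lambda>k. s * h1 (ck k) s) \<longlonglongrightarrow> 0" by (simp add: sh1_eq[OF ne])
  have "(\<lambda>k. (ck k * s)^2 * F2 (ck k * s - 1) * (exp 1 * F0 (1 - s / ck k))
    - 2 * ((ck k * s) * F1 (ck k * s - 1)) * exp 1 * ((s / ck k) * F1 (1 - s / ck k))
    + F0 (ck k * s - 1) * exp 1 * ((s / ck k)^2 * F2 (1 - s / ck k))) \<longlonglongrightarrow> 0 * 1 - 2 * 0 * exp 1 * 0 + 1 * exp 1 * 0"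
    using A A2 G B U U2 e1 by (intro tendsto_intros) auto
  then show "(\<lambda>k. s^2 * h2 (ck k) s) \<longlonglongrightarrow> 0" by (simp add: sh2_eq[OF ne])
qed

definition zeta :: "nat \<Rightarrow> real^'n \<Rightarrow> real" where "zeta k x = hk (ck k) (x \<bullet> x)"

lemma inner_self_deriv: "((\<lambda>y::real^'n. y \<bullet> y) has_derivative (\<lambda>h. 2 * (x \<bullet> h))) (at x)"
proof -
  have "((\<lambda>y::real^'n. y \<bullet> y) has_derivative (\<lambda>h. x \<bullet> h + h \<bullet> x)) (at x)"
    by (rule has_derivative_inner[OF has_derivative_ident has_derivative_ident])
  then show ?thesis by (simp add: inner_commute)
qed

lemma zeta_Sm: "Sm (zeta k)"
proof -
  let ?c = "ck k"
  have q: "Sm (\<lambda>x::real^'n. x \<bullet> x)" by (rule Sm_inner)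
  have a: "Sm (\<lambda>x::real^'n. ?c * (x \<bullet> x) + (-1))"
    by (rule Sm_add[OF Sm_mult[OF Sm_const q] Sm_const])
  have b: "Sm (\<lambda>x::real^'n. 1 + (- (1/?c)) * (x \<bullet> x))"
    by (rule Sm_add[OF Sm_const Sm_mult[OF Sm_const q]])
  have eq: "zeta k = (\<lambda>x::real^'n. F0 (?c * (x \<bullet> x) + (-1)) * (exp 1 * F0 (1 + (- (1/?c)) * (x \<bullet> x))))"
    by (rule ext) (simp add: zeta_def hk_def)
  show ?thesis unfolding eq
    by (rule Sm_mult[OF Sm_comp[OF F0_Fset a] Sm_mult[OF Sm_const Sm_comp[OF F0_Fset b]]])
qed

lemma zeta_supp: "{x::real^'n. zeta k x \<noteq> 0} \<subseteq> {x. 1 / ck k \<le> x \<bullet> x \<and> x \<bullet> x \<le> ck k}"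
proof
  fix x :: "real^'n" assume "x \<in> {x. zeta k x \<noteq> 0}"
  then have h: "F0 (ck k * (x \<bullet> x) - 1) \<noteq> 0" "F0 (1 - (x \<bullet> x) / ck k) \<noteq> 0"
    by (auto simp: zeta_def hk_def)
  have c: "0 < ck k" using ck_ge1[of k] by simp
  from h(1) have "0 < ck k * (x \<bullet> x) - 1" by (simp add: F0_eq split: if_splits)
  then have "1 / ck k \<le> x \<bullet> x" using c by (simp add: field_simps)
  moreover from h(2) have "0 < 1 - (x \<bullet> x) / ck k" by (simp add: F0_eq split: if_splits)
  then have "x \<bullet> x \<le> ck k" using c by (simp add: field_simps)
  ultimately show "x \<in> {x. 1 / ck k \<le> x \<bullet> x \<and> x \<bullet> x \<le> ck k}" by simp
qed

lemma zeta_A0: "zeta k \<in> A0"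
proof -
  let ?K = "{x::real^'n. 1 / ck k \<le> x \<bullet> x \<and> x \<bullet> x \<le> ck k}"
  have cK: "closed ?K"
    by (intro closed_Collect_conj closed_Collect_le continuous_intros)
  have cl: "closure {x. zeta k x \<noteq> 0} \<subseteq> ?K"
    by (rule closure_minimal[OF zeta_supp cK])
  have "?K \<subseteq> cball 0 (sqrt (ck k))"
  proof
    fix x assume "x \<in> ?K"
    then have "x \<bullet> x \<le> ck k" by simp
    then have "sqrt (x \<bullet> x) \<le> sqrt (ck k)" by (rule real_sqrt_le_mono)
    then show "x \<in> cball 0 (sqrt (ck k))" by (simp add: norm_eq_sqrt_inner)
  qed
  then have "bounded {x::real^'n. zeta k x \<noteq> 0}"
    using bounded_subset[OF bounded_cball order.trans[OF zeta_supp]] by blast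
  then have "compact (closure {x::real^'n. zeta k x \<noteq> 0})" by simp
  moreover have "(0::real^'n) \<notin> closure {x. zeta k x \<noteq> 0}"
  proof
    assume "(0::real^'n) \<in> closure {x. zeta k x \<noteq> 0}"
    then have "(0::real^'n) \<in> ?K" using cl by blast
    then show False using ck_ge1[of k] by simp
  qed
  ultimately show ?thesis unfolding A0_def using Sm_smooth[OF zeta_Sm] by blast
qed

lemma zeta_deriv: fixes d :: real and x :: "real^'n" shows "((\<lambda>y. zeta k y - d) has_derivative (\<lambda>h. h1 (ck k) (x \<bullet> x) * (2 * (x \<bullet> h)))) (at x)"
proof -
  have ne: "ck k \<noteq> 0" using ck_ge1[of k] by simp
  have "((\<lambda>y. hk (ck k) (y \<bullet> y)) has_derivative (\<lambda>h. 2 * (x \<bullet> h) * h1 (ck k) (x \<bullet> x))) (at x)"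
    by (rule DERIV_compose_FDERIV[OF hk_deriv[OF ne] inner_self_deriv])
  then have "((\<lambda>y. hk (ck k) (y \<bullet> y) - d) has_derivative (\<lambda>h. 2 * (x \<bullet> h) * h1 (ck k) (x \<bullet> x) - 0)) (at x)"
    by (intro derivative_intros)
  then show ?thesis by (simp add: zeta_def mult_ac)
qed

lemma pderiv_zeta: fixes d :: real and x :: "real^'n" shows "pderiv i (\<lambda>y. zeta k y - d) x = h1 (ck k) (x \<bullet> x) * (2 * x$i)"
proof -
  have "pderiv i (\<lambda>y. zeta k y - d) x = h1 (ck k) (x \<bullet> x) * (2 * (x \<bullet> axis i 1))"
    unfolding pderiv_def by (simp only: frechet_derivative_at[OF zeta_deriv[where k=k and d=d and x=x], symmetric])
  then show ?thesis by (simp add: inner_axis)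
qed

lemma pderiv_zeta0: "pderiv i (zeta k) = (\<lambda>x. h1 (ck k) (x \<bullet> x) * (2 * x$i))"
proof
  fix x show "pderiv i (zeta k) x = h1 (ck k) (x \<bullet> x) * (2 * x$i)"
    using pderiv_zeta[where d=0 and x=x and i=i and k=k] by simp
qed

lemma Gamma_zeta: "GammaS A a b (\<lambda>x. zeta k x - 1) (\<lambda>x. zeta k x - 1) x
   = (phiS A a b x)^2 * norm x powr (2 * (1 - alphaS A a b)) * (4 * (x \<bullet> x) * (h1 (ck k) (x \<bullet> x))^2)"
proof -
  have "(\<Sum>i\<in>UNIV. pderiv i (\<lambda>x. zeta k x - 1) x * pderiv i (\<lambda>x. zeta k x - 1) x)
      = (\<Sum>i\<in>UNIV. 4 * (h1 (ck k) (x \<bullet> x))^2 * (x$i * x$i))"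
    by (simp add: pderiv_zeta power2_eq_square mult_ac)
  also have "\<dots> = 4 * (h1 (ck k) (x \<bullet> x))^2 * (\<Sum>i\<in>UNIV. x$i * x$i)"
    by (rule sum_distrib_left[symmetric])
  also have "\<dots> = 4 * (x \<bullet> x) * (h1 (ck k) (x \<bullet> x))^2"
    unfolding inner_vec_def[of x x] by (simp add: mult_ac)
  finally show ?thesis unfolding GammaS_def by simp
qed

lemma Gamma_one: "GammaS A a b (\<lambda>x. 1) (\<lambda>x. 1) x = 0"
proof -
  have "pderiv i (\<lambda>x. 1) x = 0" for i
    unfolding pderiv_def by (simp only: frechet_derivative_at[OF has_derivative_const[of "1::real" "at x"], symmetric])
  then show ?thesis by (simp add: GammaS_def)
qed

lemma DD_ge: "\<forall>i. 0 \<le> A$i \<Longrightarrow> real CARD('n) \<le> DD (A::real^'n)"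
  unfolding DD_def by (simp add: sum_nonneg)

lemma params:
  fixes A :: "real^'n"
  assumes d2: "CARD('n) \<ge> 2" and A0: "\<forall>i. 0 \<le> A$i" and c0: "0 \<le> b - a" and c1: "b - a < 1"
    and aD: "a < (DD A - 2) / 2" and n2: "2 < nS A a b"
  shows "0 < nS A a b" "alphaS A a b * nS A a b = DD A - b * pS A a b" "0 < DD A - b * pS A a b"
    "0 < alphaS A a b"
proof -
  define D where "D = DD A"
  define c where "c = b - a"
  define E where "E = D - 2 + 2 * c"
  have D2: "2 \<le> D" using DD_ge[OF A0] d2 unfolding D_def by linarith
  have E0: "0 \<le> E" using D2 c0 by (simp add: E_def c_def)
  have pdef: "pS A a b = 2 * D / E" by (simp add: pS_def D_def E_def c_def)
  have E1: "E \<noteq> 0"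
  proof
    assume "E = 0"
    then have "pS A a b = 0" using pdef by simp
    then have "nS A a b = 0" by (simp add: nS_def)
    then show False using n2 by simp
  qed
  then have Ep: "0 < E" using E0 by simp
  have p2: "pS A a b - 2 = 4 * (1 - c) / E" using Ep unfolding pdef E_def by (simp add: field_simps)
  have c1': "0 < 1 - c" using c1 by (simp add: c_def)
  have ndef: "nS A a b = D / (1 - c)"
    unfolding nS_def p2 unfolding pdef using Ep c1' by (simp add: field_simps)
  show "0 < nS A a b" using n2 by simp
  have adef: "alphaS A a b = 1 + a - b * D / E" by (simp add: alphaS_def pdef)
  have key: "(1 + a) * E - b * D = (E - 2 * b) * (1 - c)" unfolding E_def c_def by algebra
  show an: "alphaS A a b * nS A a b = DD A - b * pS A a b"
  proof -
    have "alphaS A a b * nS A a b = ((1 + a) * E - b * D) * D / (E * (1 - c))"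
      unfolding adef ndef using Ep c1' by (simp add: field_simps)
    also have "\<dots> = (E - 2 * b) * D / E" unfolding key using c1' Ep by (simp add: field_simps)
    also have "\<dots> = D - b * pS A a b" unfolding pdef using Ep by (simp add: field_simps)
    finally show ?thesis by (simp add: D_def)
  qed
  have "DD A - b * pS A a b = D * (D - 2 - 2 * a) / E"
    unfolding pdef D_def[symmetric] using Ep by (simp add: field_simps E_def c_def)
  moreover have "0 < D * (D - 2 - 2 * a) / E" using Ep D2 aD by (simp add: D_def)
  ultimately show pos: "0 < DD A - b * pS A a b" by simp
  show "0 < alphaS A a b" using an pos n2
    by (metis zero_less_mult_pos2 order.strict_trans zero_less_numeral)
qed

lemma meas_normpowr[measurable]: "(\<lambda>x::'a::euclidean_space. norm x powr s) \<in> borel_measurable borel"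
  by measurable

lemma cball_borel[measurable]: "cball (c::'a::metric_space) r \<in> sets borel"
  by (simp add: borel_closed)

lemma exists_dyadic_small:
  assumes "0 < r" "r \<le> (1::real)"
  shows "\<exists>m. (1/2)^(Suc m) < r \<and> r \<le> (1/2)^m"
proof -
  obtain n where n: "(1/2::real)^n < r" using real_arch_pow_inv[OF assms(1), of "1/2"] by auto
  have "(1/2::real)^(Suc n) \<le> (1/2)^n" by simp
  then have ex: "\<exists>m. (1/2::real)^(Suc m) < r" using n by (intro exI[of _ n]) linarith
  define m where "m = (LEAST m. (1/2::real)^(Suc m) < r)"
  have "(1/2::real)^(Suc m) < r" unfolding m_def by (rule LeastI_ex[OF ex])
  moreover have "r \<le> (1/2)^m"
  proof (cases m)
    case 0 then show ?thesis using assms by simp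
  next
    case (Suc k)
    then have "\<not> (1/2::real)^(Suc k) < r" using not_less_Least[of k "\<lambda>m. (1/2::real)^(Suc m) < r"] m_def
      by simp
    then show ?thesis using Suc by simp
  qed
  ultimately show ?thesis by blast
qed

lemma exists_dyadic_large:
  assumes "1 < (r::real)"
  shows "\<exists>m. 2^m \<le> r \<and> r \<le> 2^(Suc m)"
proof -
  obtain n where n: "r < (2::real)^n" using real_arch_pow[of 2 r] by auto
  have "(2::real)^n \<le> 2^(Suc n)" by simp
  then have ex: "\<exists>m. r < (2::real)^(Suc m)" using n by (intro exI[of _ n]) linarith
  define m where "m = (LEAST m. r < (2::real)^(Suc m))"
  have "r < (2::real)^(Suc m)" unfolding m_def by (rule LeastI_ex[OF ex])
  moreover have "2^m \<le> r"
  proof (cases m)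
    case 0 then show ?thesis using assms by simp
  next
    case (Suc k)
    then have "\<not> r < (2::real)^(Suc k)" using not_less_Least[of k "\<lambda>m. r < (2::real)^(Suc m)"] m_def
      by simp
    then show ?thesis using Suc by simp
  qed
  ultimately show ?thesis by auto
qed

lemma pow_powr: "0 < (x::real) \<Longrightarrow> (x^k) powr s = (x powr s)^k"
  by (simp add: powr_realpow[symmetric] powr_powr powr_power mult.commute)

lemma le_suminf_ennreal: "(f::nat \<Rightarrow> ennreal) m \<le> suminf f"
  using sum_le_suminf[OF summableI, of "{m}" f] by simp

lemma int_small_neg:
  fixes s :: real
  assumes s1: "- real CARD('n) < s" and s0: "s < 0"
  shows "integrable lborel (\<lambda>x::real^'n. indicator (cball 0 1) x * norm x powr s)"
proof -
  define d where "d = CARD('n)"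
  define \<rho> where "\<rho> = (2::real) powr (-s)"
  define V where "V = unit_ball_vol (real d)"
  have \<rho>0: "0 < \<rho>" by (simp add: \<rho>_def)
  have V0: "0 \<le> V" by (simp add: V_def)
  let ?M = "lborel :: (real^'n) measure"
  let ?g = "\<lambda>j x. ennreal (\<rho>^(Suc j)) * indicator (cball (0::real^'n) ((1/2)^j)) x"
  have pt: "ennreal (indicator (cball 0 1) x * norm x powr s) \<le> (\<Sum>j. ?g j x)" for x :: "real^'n"
  proof (cases "x \<in> cball 0 1 \<and> x \<noteq> 0")
    case True
    then have r: "0 < norm x" "norm x \<le> 1" by auto
    obtain m where m: "(1/2)^(Suc m) < norm x" "norm x \<le> (1/2)^m"
      using exists_dyadic_small[OF r] by blast
    have "norm x powr s \<le> ((1/2)^(Suc m)) powr s"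
      by (rule powr_mono2') (use s0 m in auto)
    also have "\<dots> = ((1/2) powr s)^(Suc m)" by (rule pow_powr) simp
    also have "(1/2::real) powr s = \<rho>"
    proof -
      have "(1/2::real) powr s = inverse (2 powr s)" using inverse_powr[of 2 s] by simp
      also have "\<dots> = \<rho>" unfolding \<rho>_def by (rule powr_minus[symmetric])
      finally show ?thesis .
    qed
    finally have "ennreal (indicator (cball 0 1) x * norm x powr s) \<le> ?g m x"
      using True m(2) by (auto intro!: ennreal_leI)
    also have "\<dots> \<le> (\<Sum>j. ?g j x)" by (rule le_suminf_ennreal)
    finally show ?thesis .
  next
    case False
    then show ?thesis by (auto simp: indicator_def)
  qed
  have "(\<integral>\<^sup>+ x. ennreal (norm (indicator (cball 0 1) x * norm x powr s)) \<partial>?M)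
      = (\<integral>\<^sup>+ x. ennreal (indicator (cball 0 1) x * norm x powr s) \<partial>?M)"
    by (rule nn_integral_cong) (simp add: indicator_def)
  also have "\<dots> \<le> (\<integral>\<^sup>+ x. (\<Sum>j. ?g j x) \<partial>?M)"
    by (intro nn_integral_mono pt)
  also have "\<dots> = (\<Sum>j. \<integral>\<^sup>+ x. ?g j x \<partial>?M)"
    by (rule nn_integral_suminf) measurable
  also have "\<dots> = (\<Sum>j. ennreal (\<rho>^(Suc j) * (V * ((1/2)^j)^d)))"
  proof (intro suminf_cong)
    fix j
    have "(\<integral>\<^sup>+ x. ?g j x \<partial>?M) = ennreal (\<rho>^(Suc j)) * emeasure lborel (cball (0::real^'n) ((1/2)^j))"
      using nn_integral_cmult_indicator[of "cball (0::real^'n) ((1/2)^j)" lborel "ennreal (\<rho>^(Suc j))"]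
      by (simp add: mult.commute)
    also have "\<dots> = ennreal (\<rho>^(Suc j) * (V * ((1/2)^j)^d))"
      by (simp add: emeasure_cball V_def d_def ennreal_mult' V0 \<rho>0 less_imp_le)
    finally show "(\<integral>\<^sup>+ x. ?g j x \<partial>?M) = ennreal (\<rho>^(Suc j) * (V * ((1/2)^j)^d))" .
  qed
  also have "\<dots> = ennreal (\<Sum>j. \<rho>^(Suc j) * (V * ((1/2)^j)^d))"
  proof (rule suminf_ennreal2)
    show "0 \<le> \<rho>^(Suc j) * (V * ((1/2)^j)^d)" for j using \<rho>0 V0 by simp
    have q: "\<rho> * (1/2)^d < 1"
    proof -
      have "\<rho> < 2 powr (real d)" unfolding \<rho>_def using s1 d_def by (intro powr_less_mono) auto
      also have "\<dots> = 2^d" by (simp add: powr_realpow)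
      finally show ?thesis by (simp add: field_simps)
    qed
    have "summable (\<lambda>j. (\<rho> * V) * (\<rho> * (1/2)^d)^j)"
      by (intro summable_mult summable_geometric) (use q \<rho>0 in simp)
    moreover have "(\<lambda>j. (\<rho> * V) * (\<rho> * (1/2)^d)^j) = (\<lambda>j. \<rho>^(Suc j) * (V * ((1/2)^j)^d))"
      by (rule ext) (simp add: power_mult_distrib power_mult[symmetric] mult.commute mult.left_commute)
    ultimately show "summable (\<lambda>j. \<rho>^(Suc j) * (V * ((1/2)^j)^d))" by simp
  qed
  also have "\<dots> < \<infinity>" by simp
  finally show ?thesis by (intro integrableI_bounded) measurable
qed

lemma int_small:
  fixes s :: real
  assumes s1: "- real CARD('n) < s"
  shows "integrable lborel (\<lambda>x::real^'n. indicator (cball 0 1) x * norm x powr s)"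
proof -
  define s' where "s' = min s (-1/2)"
  have c1: "1 \<le> real CARD('n)" using zero_less_card_finite[where 'a='n] by linarith
  have c2: "- real CARD('n) < -1/2" using c1 by linarith
  have "- real CARD('n) < s'" unfolding s'_def using s1 c2 by (simp add: min_def)
  moreover have "s' < 0" unfolding s'_def by simp
  ultimately have "- real CARD('n) < s'" "s' < 0" by blast+
  note I = int_small_neg[OF this]
  show ?thesis
  proof (rule Bochner_Integration.integrable_bound[OF I])
    show "(\<lambda>x::real^'n. indicator (cball 0 1) x * norm x powr s) \<in> borel_measurable lborel" by measurable
    show "AE x in lborel. norm (indicator (cball 0 1) x * norm x powr s) \<le> norm (indicator (cball (0::real^'n) 1) x * norm x powr s')"
    proof (rule AE_I2)
      fix x :: "real^'n"
      show "norm (indicator (cball 0 1) x * norm x powr s) \<le> norm (indicator (cball (0::real^'n) 1) x * norm x powr s')"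
      proof (cases "norm x \<le> 1")
        case True
        have "norm x powr s \<le> norm x powr s'" by (rule powr_mono') (use True in \<open>auto simp: s'_def\<close>)
        then show ?thesis using True by (simp add: indicator_def)
      qed (simp add: indicator_def)
    qed
  qed
qed

lemma int_large:
  fixes s :: real
  assumes s1: "s < - real CARD('n)"
  shows "integrable lborel (\<lambda>x::real^'n. indicator (UNIV - cball 0 1) x * norm x powr s)"
proof -
  define d where "d = CARD('n)"
  define \<sigma> where "\<sigma> = (2::real) powr s"
  define V where "V = unit_ball_vol (real d)"
  have s0: "s < 0" using s1 by (smt (verit) of_nat_0_le_iff)
  have \<sigma>0: "0 < \<sigma>" by (simp add: \<sigma>_def)
  have V0: "0 \<le> V" by (simp add: V_def)
  let ?M = "lborel :: (real^'n) measure"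
  let ?g = "\<lambda>j x. ennreal (\<sigma>^j) * indicator (cball (0::real^'n) (2^(Suc j))) x"
  have pt: "ennreal (indicator (UNIV - cball 0 1) x * norm x powr s) \<le> (\<Sum>j. ?g j x)" for x :: "real^'n"
  proof (cases "1 < norm x")
    case True
    obtain m where m: "2^m \<le> norm x" "norm x \<le> 2^(Suc m)"
      using exists_dyadic_large[OF True] by blast
    have "norm x powr s \<le> (2^m) powr s"
      by (rule powr_mono2') (use s0 m in auto)
    also have "\<dots> = (2 powr s)^m" by (rule pow_powr) simp
    finally have "ennreal (indicator (UNIV - cball 0 1) x * norm x powr s) \<le> ?g m x"
      using True m(2) by (auto intro!: ennreal_leI simp: \<sigma>_def)
    also have "\<dots> \<le> (\<Sum>j. ?g j x)" by (rule le_suminf_ennreal)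
    finally show ?thesis .
  next
    case False
    then show ?thesis by (auto simp: indicator_def)
  qed
  have "(\<integral>\<^sup>+ x. ennreal (norm (indicator (UNIV - cball 0 1) x * norm x powr s)) \<partial>?M)
      = (\<integral>\<^sup>+ x. ennreal (indicator (UNIV - cball 0 1) x * norm x powr s) \<partial>?M)"
    by (rule nn_integral_cong) (simp add: indicator_def)
  also have "\<dots> \<le> (\<integral>\<^sup>+ x. (\<Sum>j. ?g j x) \<partial>?M)"
    by (intro nn_integral_mono pt)
  also have "\<dots> = (\<Sum>j. \<integral>\<^sup>+ x. ?g j x \<partial>?M)"
    by (rule nn_integral_suminf) measurable
  also have "\<dots> = (\<Sum>j. ennreal (\<sigma>^j * (V * (2^(Suc j))^d)))"
  proof (intro suminf_cong)
    fix j
    have "(\<integral>\<^sup>+ x. ?g j x \<partial>?M) = ennreal (\<sigma>^j) * emeasure lborel (cball (0::real^'n) (2^(Suc j)))"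
      using nn_integral_cmult_indicator[of "cball (0::real^'n) (2^(Suc j))" lborel "ennreal (\<sigma>^j)"]
      by (simp add: mult.commute)
    also have "\<dots> = ennreal (\<sigma>^j * (V * (2^(Suc j))^d))"
      by (simp add: emeasure_cball V_def d_def ennreal_mult' V0 \<sigma>0 less_imp_le)
    finally show "(\<integral>\<^sup>+ x. ?g j x \<partial>?M) = ennreal (\<sigma>^j * (V * (2^(Suc j))^d))" .
  qed
  also have "\<dots> = ennreal (\<Sum>j. \<sigma>^j * (V * (2^(Suc j))^d))"
  proof (rule suminf_ennreal2)
    show "0 \<le> \<sigma>^j * (V * (2^(Suc j))^d)" for j using \<sigma>0 V0 by simp
    have q: "\<sigma> * 2^d < 1"
    proof -
      have "\<sigma> < 2 powr (- real d)" unfolding \<sigma>_def using s1 d_def by (intro powr_less_mono) auto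
      also have "\<dots> = inverse (2^d)" by (simp add: powr_minus powr_realpow)
      finally show ?thesis by (simp add: field_simps)
    qed
    have "summable (\<lambda>j. (V * 2^d) * (\<sigma> * 2^d)^j)"
      by (intro summable_mult summable_geometric) (use q \<sigma>0 in simp)
    moreover have "(V * 2^d) * (\<sigma> * 2^d)^j = \<sigma>^j * (V * (2^(Suc j))^d)" for j
    proof -
      have "(2::real)^(Suc j * d) = 2^d * (2^d)^j"
        by (simp add: power_add[symmetric] power_mult[symmetric] mult.commute)
      then show ?thesis by (simp add: power_mult_distrib power_mult[symmetric] mult_ac)
    qed
    ultimately show "summable (\<lambda>j. \<sigma>^j * (V * (2^(Suc j))^d))" by simp
  qed
  also have "\<dots> < \<infinity>" by simp
  finally show ?thesis by (intro integrableI_bounded) measurable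
qed

definition SA :: "real^'n \<Rightarrow> real" where "SA A = (\<Sum>i\<in>UNIV. A$i)"

lemma DD_SA: "DD A = real CARD('n) + SA (A::real^'n)" by (simp add: DD_def SA_def)

definition Bd :: "real^'n \<Rightarrow> real \<Rightarrow> real \<Rightarrow> real \<Rightarrow> real^'n \<Rightarrow> real" where
  "Bd A a b e x = phiS A a b x powr (e - nS A a b) * norm x powr (SA A - b * pS A a b - alphaS A a b * e)"

lemma phi_ge: "1/2 \<le> phiS A a b x" "norm x powr (2 * alphaS A a b) / 2 \<le> phiS A a b x" "0 < phiS A a b x"
  unfolding phiS_def by (auto intro: add_pos_nonneg)

lemma meas_phi[measurable]: "phiS A a b \<in> borel_measurable borel"
  unfolding phiS_def[abs_def] by measurable

lemma meas_Bd[measurable]: "Bd A a b e \<in> borel_measurable borel"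
  unfolding Bd_def[abs_def] by measurable

lemma inv2_powr: "1 / (2::real) powr t = 2 powr (-t)"
proof -
  have "1 / (2::real) powr t = inverse (2 powr t)" by (rule inverse_eq_divide[symmetric])
  also have "\<dots> = 2 powr (- t)" by (rule powr_minus[symmetric])
  finally show ?thesis .
qed

lemma phi_pow_bound:
  assumes "e \<le> nS A a b"
  shows "phiS A a b x powr (e - nS A a b) \<le> 2 powr (nS A a b - e)"
    "x \<noteq> 0 \<Longrightarrow> phiS A a b x powr (e - nS A a b) \<le> 2 powr (nS A a b - e) * norm x powr (2 * alphaS A a b * (e - nS A a b))"
proof -
  let ?n = "nS A a b" and ?\<phi> = "phiS A a b x"
  have en: "e - ?n \<le> 0" using assms by simp
  have "?\<phi> powr (e - ?n) \<le> (1/2) powr (e - ?n)"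
    by (rule powr_mono2'[OF en]) (use phi_ge in auto)
  also have "(1/2::real) powr (e - ?n) = 2 powr (?n - e)"
  proof -
    have "(1/2::real) powr (e - ?n) = 1 / 2 powr (e - ?n)" by (simp add: powr_divide)
    also have "\<dots> = inverse (2 powr (e - ?n))" by (rule inverse_eq_divide[symmetric])
    also have "\<dots> = 2 powr (- (e - ?n))" by (rule powr_minus[symmetric])
    also have "(2::real) powr (- (e - ?n)) = 2 powr (?n - e)" by simp
    finally show ?thesis .
  qed
  finally show "?\<phi> powr (e - ?n) \<le> 2 powr (?n - e)" .
  assume x: "x \<noteq> 0"
  have "?\<phi> powr (e - ?n) \<le> (norm x powr (2 * alphaS A a b) / 2) powr (e - ?n)"
    by (rule powr_mono2'[OF en]) (use phi_ge x in auto)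
  also have "\<dots> = 2 powr (?n - e) * norm x powr (2 * alphaS A a b * (e - ?n))"
  proof -
    have "(norm x powr (2 * alphaS A a b) / 2) powr (e - ?n) = (norm x powr (2 * alphaS A a b)) powr (e - ?n) / 2 powr (e - ?n)"
      by (rule powr_divide)
    also have "(norm x powr (2 * alphaS A a b)) powr (e - ?n) = norm x powr (2 * alphaS A a b * (e - ?n))"
      by (rule powr_powr)
    also have "norm x powr (2 * alphaS A a b * (e - ?n)) / 2 powr (e - ?n) = norm x powr (2 * alphaS A a b * (e - ?n)) * (1 / 2 powr (e - ?n))"
      by simp
    also have "1 / (2::real) powr (e - ?n) = 2 powr (?n - e)" unfolding inv2_powr by simp
    finally show ?thesis by (simp add: mult.commute)
  qed
  finally show "?\<phi> powr (e - ?n) \<le> 2 powr (?n - e) * norm x powr (2 * alphaS A a b * (e - ?n))" .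
qed

definition Pw :: "real \<Rightarrow> real \<Rightarrow> real^'n \<Rightarrow> real" where
  "Pw s1 s2 x = indicator (cball 0 1) x * norm x powr s1 + indicator (UNIV - cball 0 1) x * norm x powr s2"

lemma Pw_int: "- real CARD('n) < s1 \<Longrightarrow> s2 < - real CARD('n) \<Longrightarrow> integrable lborel (Pw s1 s2 :: real^'n \<Rightarrow> real)"
  unfolding Pw_def[abs_def] by (intro Bochner_Integration.integrable_add int_small int_large)

lemma Pw_nonneg: "0 \<le> Pw s1 s2 x" unfolding Pw_def by (simp add: indicator_def)

lemma Bd_le:
  assumes "e \<le> nS A a b"
  shows "Bd A a b e x \<le> 2 powr (nS A a b - e) * Pw (SA A - b * pS A a b - alphaS A a b * e)
      (SA A - b * pS A a b - alphaS A a b * e + 2 * alphaS A a b * (e - nS A a b)) x"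
proof (cases "x = 0")
  case True then show ?thesis by (simp add: Bd_def Pw_def)
next
  case False
  let ?s1 = "SA A - b * pS A a b - alphaS A a b * e" and ?t = "2 * alphaS A a b * (e - nS A a b)"
  show ?thesis
  proof (cases "norm x \<le> 1")
    case True
    have "Bd A a b e x \<le> 2 powr (nS A a b - e) * norm x powr ?s1"
      unfolding Bd_def by (rule mult_right_mono[OF phi_pow_bound(1)[OF assms]]) simp
    then show ?thesis using True by (simp add: Pw_def)
  next
    case F: False
    have "Bd A a b e x \<le> (2 powr (nS A a b - e) * norm x powr ?t) * norm x powr ?s1"
      unfolding Bd_def by (rule mult_right_mono[OF phi_pow_bound(2)[OF assms False]]) simp
    also have "\<dots> = 2 powr (nS A a b - e) * norm x powr (?s1 + ?t)" by (simp add: powr_add mult_ac)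
    finally show ?thesis using F by (simp add: Pw_def)
  qed
qed

lemma Bd_int:
  fixes A :: "real^'n"
  assumes d2: "CARD('n) \<ge> 2" and A0: "\<forall>i. 0 \<le> A$i" and c0: "0 \<le> b - a" and c1: "b - a < 1"
    and aD: "a < (DD A - 2) / 2" and n2: "2 < nS A a b" and en: "e < nS A a b"
  shows "integrable lborel (Bd A a b e)"
proof -
  note P = params[OF d2 A0 c0 c1 aD n2]
  let ?s1 = "SA A - b * pS A a b - alphaS A a b * e"
  let ?s2 = "?s1 + 2 * alphaS A a b * (e - nS A a b)"
  have "?s1 + real CARD('n) = alphaS A a b * (nS A a b - e)"
    using P(2) by (simp add: DD_SA algebra_simps)
  moreover have "0 < alphaS A a b * (nS A a b - e)" using P(4) en by simp
  ultimately have s1: "- real CARD('n) < ?s1" by linarith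
  have "?s2 + real CARD('n) = alphaS A a b * (e - nS A a b)"
    using P(2) by (simp add: DD_SA algebra_simps)
  moreover have "alphaS A a b * (e - nS A a b) < 0" using P(4) en by (simp add: mult_pos_neg)
  ultimately have s2: "?s2 < - real CARD('n)" by linarith
  have I: "integrable lborel (\<lambda>x::real^'n. 2 powr (nS A a b - e) * Pw ?s1 ?s2 x)"
    by (intro Bochner_Integration.integrable_mult_right Pw_int s1 s2)
  show ?thesis
  proof (rule Bochner_Integration.integrable_bound[OF I])
    show "Bd A a b e \<in> borel_measurable lborel" by measurable
    show "AE x in lborel. norm (Bd A a b e x) \<le> norm (2 powr (nS A a b - e) * Pw ?s1 ?s2 x)"
    proof (rule AE_I2)
      fix x :: "real^'n"
      have "0 \<le> Bd A a b e x" unfolding Bd_def by simp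
      then show "norm (Bd A a b e x) \<le> norm (2 powr (nS A a b - e) * Pw ?s1 ?s2 x)"
        using Bd_le[of e A a b x] en Pw_nonneg[of ?s1 ?s2 x] by simp
    qed
  qed
qed

definition wS :: "real^'n \<Rightarrow> real \<Rightarrow> real \<Rightarrow> real^'n \<Rightarrow> real" where
  "wS A a b x = indicator (Rstar A) x * phiS A a b x powr (- nS A a b) * norm x powr (- b * pS A a b) * xpow A x"

lemma muS_eq: "muS A a b = density lebesgue (\<lambda>x. ennreal (wS A a b x))"
  unfolding muS_def wS_def ..

lemma Rstar_eq: "Rstar A = (\<Inter>i\<in>{i. 0 < A$i}. {x. 0 < x$i})"
  unfolding Rstar_def by auto

lemma Rstar_open: "open (Rstar A)"
  unfolding Rstar_eq by (intro open_INT finite_Collect_subsets) (auto intro!: open_Collect_less continuous_intros)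

lemma Rstar_borel[measurable]: "Rstar A \<in> sets borel"
  using Rstar_open by (rule borel_open)

lemma meas_xpow[measurable]: "xpow A \<in> borel_measurable borel"
  unfolding xpow_def[abs_def] by measurable

lemma meas_wS[measurable]: "wS A a b \<in> borel_measurable borel"
  unfolding wS_def[abs_def] by measurable

lemma xpow_nonneg: "0 \<le> xpow A x"
  unfolding xpow_def by (intro prod_nonneg) auto

lemma xpow_le:
  assumes A0: "\<forall>i. 0 \<le> A$i" and x: "x \<noteq> 0"
  shows "xpow A x \<le> norm x powr SA A"
proof -
  have r: "0 < norm x" using x by simp
  have "xpow A x \<le> (\<Prod>i\<in>UNIV. norm x powr (A$i))"
    unfolding xpow_def
  proof (rule prod_mono)
    fix i :: 'a
    show "0 \<le> (if A$i = 0 then 1 else \<bar>x$i\<bar> powr (A$i)) \<and> (if A$i = 0 then 1 else \<bar>x$i\<bar> powr (A$i)) \<le> norm x powr (A$i)"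
    proof (cases "A$i = 0")
      case True then show ?thesis using r by simp
    next
      case False
      have "\<bar>x$i\<bar> powr (A$i) \<le> norm x powr (A$i)"
        by (rule powr_mono2) (use A0 component_le_norm_cart[of x i] in auto)
      then show ?thesis using False by simp
    qed
  qed
  also have "\<dots> = norm x powr SA A" unfolding SA_def by (rule powr_sum[symmetric]) (use x in simp)
  finally show ?thesis .
qed

lemma wS_nonneg: "0 \<le> wS A a b x" unfolding wS_def by (simp add: xpow_nonneg)

lemma wS_pos: "0 < wS A a b x \<Longrightarrow> x \<in> Rstar A \<and> x \<noteq> 0"
proof -
  assume p: "0 < wS A a b x"
  have "x \<in> Rstar A"
  proof (rule ccontr)
    assume "x \<notin> Rstar A" then have "wS A a b x = 0" by (simp add: wS_def)
    then show False using p by simp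
  qed
  moreover have "x \<noteq> 0"
  proof
    assume "x = 0" then have "wS A a b x = 0" by (simp add: wS_def)
    then show False using p by simp
  qed
  ultimately show ?thesis by blast
qed

lemma wS_le:
  assumes A0: "\<forall>i. 0 \<le> A$i" and x: "x \<noteq> 0"
  shows "wS A a b x \<le> phiS A a b x powr (- nS A a b) * norm x powr (SA A - b * pS A a b)"
proof -
  have "wS A a b x \<le> 1 * phiS A a b x powr (- nS A a b) * norm x powr (- b * pS A a b) * norm x powr SA A"
    unfolding wS_def
    by (intro mult_mono xpow_le[OF A0 x]) (auto simp: indicator_def xpow_nonneg)
  also have "\<dots> = phiS A a b x powr (- nS A a b) * norm x powr (SA A - b * pS A a b)"
    by (simp add: powr_add[symmetric])
  finally show ?thesis .
qed

lemma conv_lemma: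
  fixes f :: "nat \<Rightarrow> 'a::euclidean_space \<Rightarrow> real"
  assumes meas: "\<And>k. f k \<in> borel_measurable borel" and nn: "\<And>k x. 0 \<le> f k x"
    and lim: "\<And>x. (\<lambda>k. f k x) \<longlonglongrightarrow> 0" and bd: "\<And>k x. f k x \<le> G x" and G: "integrable lborel G"
  shows "(\<lambda>k. \<integral>\<^sup>+ x. ennreal (f k x) \<partial>lborel) \<longlonglongrightarrow> 0"
proof -
  have m: "f k \<in> borel_measurable lborel" for k using meas[of k] by simp
  have I: "integrable lborel (f k)" for k
    by (rule Bochner_Integration.integrable_bound[OF G m]) (use nn bd in \<open>auto intro!: AE_I2 simp: order.trans[OF nn bd]\<close>)
  have eq: "(\<integral>\<^sup>+ x. ennreal (f k x) \<partial>lborel) = ennreal (integral\<^sup>L lborel (f k))" for k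
    by (rule nn_integral_eq_integral[OF I]) (use nn in auto)
  have "(\<lambda>k. integral\<^sup>L lborel (f k)) \<longlonglongrightarrow> integral\<^sup>L lborel (\<lambda>x::'a. 0::real)"
  proof (rule Bochner_Integration.integral_dominated_convergence[where w=G])
    show "(\<lambda>x::'a. 0::real) \<in> borel_measurable lborel" by simp
    show "f k \<in> borel_measurable lborel" for k by (rule m)
    show "integrable lborel G" by (rule G)
    show "AE x in lborel. (\<lambda>k. f k x) \<longlonglongrightarrow> 0" using lim by simp
    show "AE x in lborel. norm (f k x) \<le> G x" for k using nn bd by simp
  qed
  then have "(\<lambda>k. ennreal (integral\<^sup>L lborel (f k))) \<longlonglongrightarrow> ennreal 0"
    by (intro tendsto_ennrealI) simp
  then show ?thesis unfolding eq by simp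
qed

lemma muS_integral:
  assumes g: "g \<in> borel_measurable borel"
  shows "(\<integral>\<^sup>+ x. ennreal (g x) \<partial>muS A a b) = (\<integral>\<^sup>+ x. ennreal (wS A a b x * g x) \<partial>lborel)"
proof -
  have mw: "(\<lambda>x. ennreal (wS A a b x)) \<in> borel_measurable lebesgue"
    by (rule measurable_completion) simp
  have mg: "(\<lambda>x. ennreal (g x)) \<in> borel_measurable lebesgue"
    by (rule measurable_completion) (use g in simp)
  have "(\<integral>\<^sup>+ x. ennreal (g x) \<partial>muS A a b) = (\<integral>\<^sup>+ x. ennreal (wS A a b x) * ennreal (g x) \<partial>lebesgue)"
    unfolding muS_eq by (rule nn_integral_density[OF mw mg])
  also have "\<dots> = (\<integral>\<^sup>+ x. ennreal (wS A a b x * g x) \<partial>lebesgue)"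
    by (simp add: ennreal_mult' wS_nonneg)
  also have "\<dots> = (\<integral>\<^sup>+ x. ennreal (wS A a b x * g x) \<partial>lborel)"
    by (rule nn_integral_completion)
  finally show ?thesis .
qed

lemma AE_muS: "AE x in muS A a b. x \<in> Rstar A \<and> x \<noteq> 0"
proof -
  have mw: "(\<lambda>x. ennreal (wS A a b x)) \<in> borel_measurable lebesgue"
    by (rule measurable_completion) simp
  show ?thesis unfolding muS_eq AE_density[OF mw]
    by (rule AE_I2) (auto dest: wS_pos)
qed

lemma meas_hk[measurable]: "hk (ck k) \<in> borel_measurable borel"
proof -
  have "ck k \<noteq> 0" using ck_ge1[of k] by simp
  then have "continuous_on UNIV (hk (ck k))"
    using hk_deriv DERIV_isCont continuous_at_imp_continuous_on by blast
  then show ?thesis by (rule borel_measurable_continuous_onI)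
qed

lemma meas_h1[measurable]: "h1 (ck k) \<in> borel_measurable borel"
proof -
  have "ck k \<noteq> 0" using ck_ge1[of k] by simp
  then have "continuous_on UNIV (h1 (ck k))"
    using h1_deriv DERIV_isCont continuous_at_imp_continuous_on by blast
  then show ?thesis by (rule borel_measurable_continuous_onI)
qed

lemma meas_zeta[measurable]: "zeta k \<in> borel_measurable borel"
  unfolding zeta_def[abs_def] by measurable

lemma zeta_bounds: "0 \<le> zeta k x" "zeta k x \<le> 1"
  unfolding zeta_def using hk_bounds[of "ck k" "x \<bullet> x"] ck_ge1[of k] by auto

lemma norm_powr_split: "x \<noteq> 0 \<Longrightarrow> norm x powr (2 * (1 - t)) = (x \<bullet> x) * norm x powr (-2 * t)"
proof -
  assume x: "x \<noteq> 0"
  have e: "2 * (1 - t) = 2 + (-2 * t)" by simp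
  have "norm x powr (2 * (1 - t)) = norm x powr 2 * norm x powr (-2 * t)"
    unfolding e by (rule powr_add)
  also have "norm x powr 2 = (x \<bullet> x)" using x by (simp add: powr_numeral power2_norm_eq_inner)
  finally show ?thesis .
qed

definition Ek :: "real^'n \<Rightarrow> real \<Rightarrow> real \<Rightarrow> nat \<Rightarrow> real^'n \<Rightarrow> real" where
  "Ek A a b k x = (zeta k x - 1)^2 + (phiS A a b x)^2 * norm x powr (2 * (1 - alphaS A a b))
      * (4 * (x \<bullet> x) * (h1 (ck k) (x \<bullet> x))^2)"

lemma meas_Ek[measurable]: "Ek A a b k \<in> borel_measurable borel"
  unfolding Ek_def[abs_def] by measurable

lemma Ek_alt: "x \<noteq> 0 \<Longrightarrow> Ek A a b k x = (zeta k x - 1)^2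
   + 4 * (phiS A a b x)^2 * norm x powr (-2 * alphaS A a b) * ((x \<bullet> x) * h1 (ck k) (x \<bullet> x))^2"
  unfolding Ek_def norm_powr_split[of x] by (simp add: power2_eq_square mult_ac)

lemma Ek_nonneg: "0 \<le> Ek A a b k x"
  unfolding Ek_def by (intro add_nonneg_nonneg mult_nonneg_nonneg) auto

lemma H1_eq: "H1sq A a b (\<lambda>x. zeta k x - 1) = (\<integral>\<^sup>+ x. ennreal (wS A a b x * Ek A a b k x) \<partial>lborel)"
proof -
  have "H1sq A a b (\<lambda>x. zeta k x - 1) = (\<integral>\<^sup>+ x. ennreal (Ek A a b k x) \<partial>muS A a b)"
    unfolding H1sq_def Ek_def Gamma_zeta ..
  also have "\<dots> = (\<integral>\<^sup>+ x. ennreal (wS A a b x * Ek A a b k x) \<partial>lborel)"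
    by (rule muS_integral) measurable
  finally show ?thesis .
qed

lemma Bd_nonneg: "0 \<le> Bd A a b e x" unfolding Bd_def by simp

lemma H1_bound:
  assumes A0: "\<forall>i. 0 \<le> A$i"
  shows "wS A a b x * Ek A a b k x \<le> Bd A a b 0 x + 324 * Bd A a b 2 x"
proof (cases "x = 0")
  case True then show ?thesis using Bd_nonneg[of A a b 0 x] Bd_nonneg[of A a b 2 x] by (simp add: wS_def)
next
  case False
  let ?\<phi> = "phiS A a b x" and ?r = "norm x" and ?q = "x \<bullet> x" and ?\<alpha> = "alphaS A a b"
  have q0: "0 < ?q" using False by simp
  have "\<bar>zeta k x - 1\<bar> \<le> 1" using zeta_bounds[of k x] by simp
  then have z: "(zeta k x - 1)^2 \<le> 1" by (simp add: abs_square_le_1)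
  have h: "(?q * h1 (ck k) ?q)^2 \<le> 81"
  proof -
    have "\<bar>?q * h1 (ck k) ?q\<bar>^2 \<le> 9^2" by (rule power_mono[OF sh1_bound[OF ck_ge1 q0]]) simp
    then show ?thesis by simp
  qed
  have "4 * ?\<phi>^2 * ?r powr (-2 * ?\<alpha>) * (?q * h1 (ck k) ?q)^2 \<le> 4 * ?\<phi>^2 * ?r powr (-2 * ?\<alpha>) * 81"
    by (rule mult_left_mono[OF h]) simp
  with z have E: "Ek A a b k x \<le> 1 + 324 * (?\<phi>^2 * ?r powr (-2 * ?\<alpha>))"
    unfolding Ek_alt[OF False] by simp
  have E0: "0 \<le> Ek A a b k x" by (rule Ek_nonneg)
  have "wS A a b x * Ek A a b k x \<le> (?\<phi> powr (- nS A a b) * ?r powr (SA A - b * pS A a b)) * (1 + 324 * (?\<phi>^2 * ?r powr (-2 * ?\<alpha>)))"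
    by (rule mult_mono[OF wS_le[OF A0 False] E _ E0]) simp
  also have "\<dots> = Bd A a b 0 x + 324 * Bd A a b 2 x"
  proof -
    have p2: "?\<phi>^2 = ?\<phi> powr 2" using phi_ge(3)[of A a b x] by (simp add: powr_numeral)
    show ?thesis unfolding Bd_def p2
      by (simp add: algebra_simps powr_add[symmetric])
  qed
  finally show ?thesis .
qed

lemma H1_lim: "(\<lambda>k. wS A a b x * Ek A a b k x) \<longlonglongrightarrow> 0"
proof (cases "x = 0")
  case True then show ?thesis by (simp add: wS_def)
next
  case False
  have q0: "0 < x \<bullet> x" using False by simp
  have "(\<lambda>k. (zeta k x - 1)^2 + 4 * (phiS A a b x)^2 * norm x powr (-2 * alphaS A a b) * ((x \<bullet> x) * h1 (ck k) (x \<bullet> x))^2)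
      \<longlonglongrightarrow> (1 - 1)^2 + 4 * (phiS A a b x)^2 * norm x powr (-2 * alphaS A a b) * 0^2"
    unfolding zeta_def using lims(1,2)[OF q0] by (intro tendsto_intros) auto
  then have "(\<lambda>k. Ek A a b k x) \<longlonglongrightarrow> 0" by (simp add: Ek_alt[OF False])
  then show ?thesis using tendsto_mult_right_zero by blast
qed

lemma H1_conv:
  fixes A :: "real^'n"
  assumes d2: "CARD('n) \<ge> 2" and A0: "\<forall>i. 0 \<le> A$i" and c0: "0 \<le> b - a" and c1: "b - a < 1"
    and aD: "a < (DD A - 2) / 2" and n2: "2 < nS A a b"
  shows "(\<lambda>k. H1sq A a b (\<lambda>x. zeta k x - 1)) \<longlonglongrightarrow> 0"
  unfolding H1_eq
proof (rule conv_lemma)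
  show "(\<lambda>x. wS A a b x * Ek A a b k x) \<in> borel_measurable borel" for k by measurable
  show "0 \<le> wS A a b x * Ek A a b k x" for k x
    using wS_nonneg Ek_nonneg by (rule mult_nonneg_nonneg)
  show "(\<lambda>k. wS A a b x * Ek A a b k x) \<longlonglongrightarrow> 0" for x by (rule H1_lim)
  show "wS A a b x * Ek A a b k x \<le> Bd A a b 0 x + 324 * Bd A a b 2 x" for k x by (rule H1_bound[OF A0])
  show "integrable lborel (\<lambda>x. Bd A a b 0 x + 324 * Bd A a b 2 x)"
    using n2 by (intro Bochner_Integration.integrable_add Bochner_Integration.integrable_mult_right
        Bd_int[OF d2 A0 c0 c1 aD n2]) auto
qed

definition cA :: "real^'n \<Rightarrow> real^'n \<Rightarrow> 'n \<Rightarrow> real" where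
  "cA A x j = (if A$j = 0 then 0 else A$j / x$j)"

lemma xpow_exp:
  assumes A0: "\<forall>i. 0 \<le> A$i" and y: "y \<in> Rstar A"
  shows "xpow A y = exp (\<Sum>j\<in>UNIV. if A$j = 0 then 0 else A$j * ln (y$j))"
proof -
  have "xpow A y = (\<Prod>j\<in>UNIV. exp (if A$j = 0 then 0 else A$j * ln (y$j)))"
    unfolding xpow_def
  proof (rule prod.cong[OF refl])
    fix j
    show "(if A$j = 0 then 1 else \<bar>y$j\<bar> powr (A$j)) = exp (if A$j = 0 then 0 else A$j * ln (y$j))"
    proof (cases "A$j = 0")
      case False
      then have "0 < A$j" using A0 by (metis less_eq_real_def)
      then have "0 < y$j" using y by (simp add: Rstar_def)
      then show ?thesis using False by (simp add: powr_def mult.commute)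
    qed simp
  qed
  also have "\<dots> = exp (\<Sum>j\<in>UNIV. if A$j = 0 then 0 else A$j * ln (y$j))"
    by (simp add: exp_sum)
  finally show ?thesis .
qed

lemma xpow_deriv:
  assumes A0: "\<forall>i. 0 \<le> A$i" and x: "x \<in> Rstar A"
  shows "(xpow A has_derivative (\<lambda>h. xpow A x * (\<Sum>j\<in>UNIV. cA A x j * h$j))) (at x)"
proof -
  let ?L = "\<lambda>y. \<Sum>j\<in>UNIV. if A$j = 0 then 0 else A$j * ln (y$j)"
  have Lder: "(?L has_derivative (\<lambda>h. \<Sum>j\<in>UNIV. cA A x j * h$j)) (at x)"
  proof (rule has_derivative_sum)
    fix j :: 'a
    show "((\<lambda>y. if A$j = 0 then 0 else A$j * ln (y$j)) has_derivative (\<lambda>h. cA A x j * h$j)) (at x)"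
    proof (cases "A$j = 0")
      case True then show ?thesis by (simp add: cA_def)
    next
      case False
      then have "0 < A$j" using A0 by (metis less_eq_real_def)
      then have xj: "0 < x$j" using x by (simp add: Rstar_def)
      have "((\<lambda>y. A$j * ln (y$j)) has_derivative (\<lambda>h. A$j * (h$j / x$j))) (at x)"
      proof -
        have "((\<lambda>y. ln (y$j)) has_derivative (\<lambda>h. h$j * inverse (x$j))) (at x)"
          by (rule DERIV_compose_FDERIV[OF DERIV_ln[OF xj] bounded_linear_imp_has_derivative[OF bounded_linear_vec_nth]])
        from has_derivative_mult_right[OF this, of "A$j"] show ?thesis by (simp add: divide_inverse)
      qed
      then show ?thesis using False by (simp add: cA_def)
    qed
  qed
  have "((\<lambda>y. exp (?L y)) has_derivative (\<lambda>h. (\<Sum>j\<in>UNIV. cA A x j * h$j) * exp (?L x))) (at x)"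
    using DERIV_compose_FDERIV[OF DERIV_exp Lder] by simp
  then have "((\<lambda>y. exp (?L y)) has_derivative (\<lambda>h. xpow A x * (\<Sum>j\<in>UNIV. cA A x j * h$j))) (at x)"
    using xpow_exp[OF A0 x] by (simp add: mult.commute)
  then show ?thesis
    by (rule has_derivative_transform_within_open[OF _ Rstar_open x]) (use xpow_exp[OF A0] in simp)
qed

lemma norm_q: "norm y powr t = (y \<bullet> y) powr (t / 2)"
proof -
  have "norm y = (y \<bullet> y) powr (1/2)" by (simp add: norm_eq_sqrt_inner powr_half_sqrt)
  then show ?thesis by (simp add: powr_powr)
qed

lemma phi_q: "phiS A a b y = (1 + (y \<bullet> y) powr alphaS A a b) / 2"
  unfolding phiS_def norm_q by simp

lemma qpow_deriv:
  fixes x :: "real^'n"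
  assumes x: "x \<noteq> 0"
  shows "((\<lambda>y. (y \<bullet> y) powr s) has_derivative (\<lambda>h. (x \<bullet> x) powr s * (s * (2 * (x \<bullet> h)) / (x \<bullet> x)))) (at x)"
proof -
  have q0: "0 < x \<bullet> x" using x by simp
  have "((\<lambda>y. (y \<bullet> y) powr s) has_derivative (\<lambda>h. (x \<bullet> x) powr s * (0 * ln (x \<bullet> x) + 2 * (x \<bullet> h) * s / (x \<bullet> x)))) (at x)"
    by (rule has_derivative_powr[OF inner_self_deriv has_derivative_const q0]) simp
  then show ?thesis by (simp add: mult_ac)
qed

definition a1 :: "real^'n \<Rightarrow> real \<Rightarrow> real \<Rightarrow> real^'n \<Rightarrow> real^'n \<Rightarrow> real" where
  "a1 A a b x h = (2 - nS A a b) * ((x \<bullet> x) powr alphaS A a b * (alphaS A a b * (2 * (x \<bullet> h)) / (x \<bullet> x)) / 2) / phiS A a b x"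
definition gS :: "real^'n \<Rightarrow> real \<Rightarrow> real \<Rightarrow> real" where
  "gS A a b = 2 * (1 - alphaS A a b) - b * pS A a b"
definition a2 :: "real^'n \<Rightarrow> real \<Rightarrow> real \<Rightarrow> real^'n \<Rightarrow> real^'n \<Rightarrow> real" where
  "a2 A a b x h = gS A a b / 2 * (2 * (x \<bullet> h)) / (x \<bullet> x)"

lemma phi_deriv:
  assumes x: "x \<noteq> 0"
  shows "(phiS A a b has_derivative (\<lambda>h. (x \<bullet> x) powr alphaS A a b * (alphaS A a b * (2 * (x \<bullet> h)) / (x \<bullet> x)) / 2)) (at x)"
proof -
  have "((\<lambda>y. (1 + (y \<bullet> y) powr alphaS A a b) / 2) has_derivative
      (\<lambda>h. (0 + (x \<bullet> x) powr alphaS A a b * (alphaS A a b * (2 * (x \<bullet> h)) / (x \<bullet> x))) / 2)) (at x)"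
  proof -
    have D: "((\<lambda>y. 1 + (y \<bullet> y) powr alphaS A a b) has_derivative
      (\<lambda>h. 0 + (x \<bullet> x) powr alphaS A a b * (alphaS A a b * (2 * (x \<bullet> h)) / (x \<bullet> x)))) (at x)"
      by (rule has_derivative_add[OF has_derivative_const qpow_deriv[OF x]])
    from has_derivative_mult_left[OF D, of "1/2"] show ?thesis by simp
  qed
  moreover have "phiS A a b = (\<lambda>y. (1 + (y \<bullet> y) powr alphaS A a b) / 2)" by (rule ext) (rule phi_q)
  ultimately show ?thesis by simp
qed

lemma Phi1_deriv:
  assumes x: "x \<noteq> 0"
  shows "((\<lambda>y. phiS A a b y powr (2 - nS A a b)) has_derivative (\<lambda>h. phiS A a b x powr (2 - nS A a b) * a1 A a b x h)) (at x)"
proof -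
  have p: "0 < phiS A a b x" by (rule phi_ge(3))
  have "((\<lambda>y. phiS A a b y powr (2 - nS A a b)) has_derivative (\<lambda>h. phiS A a b x powr (2 - nS A a b) *
     (0 * ln (phiS A a b x) + (x \<bullet> x) powr alphaS A a b * (alphaS A a b * (2 * (x \<bullet> h)) / (x \<bullet> x)) / 2 * (2 - nS A a b) / phiS A a b x))) (at x)"
    by (rule has_derivative_powr[OF phi_deriv[OF x] has_derivative_const p]) simp
  then show ?thesis unfolding a1_def by (simp add: mult_ac)
qed

lemma Phi2_deriv:
  assumes x: "x \<noteq> 0"
  shows "((\<lambda>y. norm y powr gS A a b) has_derivative (\<lambda>h. norm x powr gS A a b * a2 A a b x h)) (at x)"
  unfolding norm_q a2_def using qpow_deriv[OF x, of "gS A a b / 2"] by (simp add: mult_ac)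

definition WW :: "real^'n \<Rightarrow> real \<Rightarrow> real \<Rightarrow> real^'n \<Rightarrow> real" where
  "WW A a b y = phiS A a b y powr (2 - nS A a b) * norm y powr gS A a b * xpow A y"

lemma WW_deriv:
  assumes A0: "\<forall>i. 0 \<le> A$i" and xR: "x \<in> Rstar A" and x: "x \<noteq> 0"
  shows "(WW A a b has_derivative (\<lambda>h. WW A a b x * (a1 A a b x h + a2 A a b x h + (\<Sum>j\<in>UNIV. cA A x j * h$j)))) (at x)"
proof -
  have "((\<lambda>y. phiS A a b y powr (2 - nS A a b) * norm y powr gS A a b) has_derivative
     (\<lambda>h. phiS A a b x powr (2 - nS A a b) * (norm x powr gS A a b * a2 A a b x h) +
          phiS A a b x powr (2 - nS A a b) * a1 A a b x h * norm x powr gS A a b)) (at x)"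
    by (rule has_derivative_mult[OF Phi1_deriv[OF x] Phi2_deriv[OF x]])
  from has_derivative_mult[OF this xpow_deriv[OF A0 xR]]
  have "(WW A a b has_derivative (\<lambda>h. phiS A a b x powr (2 - nS A a b) * norm x powr gS A a b * (xpow A x * (\<Sum>j\<in>UNIV. cA A x j * h$j))
     + (phiS A a b x powr (2 - nS A a b) * (norm x powr gS A a b * a2 A a b x h) +
          phiS A a b x powr (2 - nS A a b) * a1 A a b x h * norm x powr gS A a b) * xpow A x)) (at x)"
    unfolding WW_def[abs_def] .
  moreover have "(\<lambda>h. phiS A a b x powr (2 - nS A a b) * norm x powr gS A a b * (xpow A x * (\<Sum>j\<in>UNIV. cA A x j * h$j))
     + (phiS A a b x powr (2 - nS A a b) * (norm x powr gS A a b * a2 A a b x h) +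
          phiS A a b x powr (2 - nS A a b) * a1 A a b x h * norm x powr gS A a b) * xpow A x)
     = (\<lambda>h. WW A a b x * (a1 A a b x h + a2 A a b x h + (\<Sum>j\<in>UNIV. cA A x j * h$j)))"
    by (rule ext) (simp add: WW_def algebra_simps)
  ultimately show ?thesis by simp
qed

lemma V_deriv:
  assumes c: "c \<noteq> 0"
  shows "((\<lambda>y::real^'n. h1 c (y \<bullet> y) * (2 * y$i)) has_derivative
     (\<lambda>h. h1 c (x \<bullet> x) * (2 * h$i) + 2 * (x \<bullet> h) * h2 c (x \<bullet> x) * (2 * x$i))) (at x)"
proof -
  have d1: "((\<lambda>y::real^'n. h1 c (y \<bullet> y)) has_derivative (\<lambda>h. 2 * (x \<bullet> h) * h2 c (x \<bullet> x))) (at x)"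
    by (rule DERIV_compose_FDERIV[OF h1_deriv[OF c] inner_self_deriv])
  have d2: "((\<lambda>y::real^'n. 2 * y$i) has_derivative (\<lambda>h. 2 * h$i)) (at x)"
    by (rule has_derivative_mult_right[OF bounded_linear_imp_has_derivative[OF bounded_linear_vec_nth]])
  show ?thesis by (rule has_derivative_mult[OF d1 d2])
qed

definition ka :: "real^'n \<Rightarrow> real \<Rightarrow> real \<Rightarrow> real^'n \<Rightarrow> real" where
  "ka A a b x = (2 - nS A a b) * alphaS A a b * (x \<bullet> x) powr alphaS A a b / phiS A a b x + gS A a b + SA A"

definition LSf :: "real^'n \<Rightarrow> real \<Rightarrow> real \<Rightarrow> nat \<Rightarrow> real^'n \<Rightarrow> real" where
  "LSf A a b k x = (phiS A a b x)^2 * norm x powr (-2 * alphaS A a b) *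
     (2 * ((x \<bullet> x) * h1 (ck k) (x \<bullet> x)) * (ka A a b x + real CARD('n)) + 4 * ((x \<bullet> x)^2 * h2 (ck k) (x \<bullet> x)))"

lemma sum_axis: "(\<Sum>j\<in>UNIV. f j * axis i (1::real) $ j) = f i"
proof -
  have "(\<Sum>j\<in>UNIV. f j * axis i (1::real) $ j) = (\<Sum>j\<in>UNIV. if j = i then f j else 0)"
    by (rule sum.cong) (auto simp: axis_def)
  then show ?thesis by simp
qed

lemma sum4: "(\<Sum>i\<in>(UNIV::'n::finite set). W * (p + b1 * f i + b2 * f i + b3 * g i))
   = W * (real CARD('n) * p + b1 * sum f UNIV + b2 * sum f UNIV + b3 * sum g UNIV)"
  by (simp add: sum.distrib sum_distrib_left[symmetric])

lemma xpow_pos: "\<forall>i. 0 \<le> A$i \<Longrightarrow> x \<in> Rstar A \<Longrightarrow> 0 < xpow A x"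
  by (subst xpow_exp) auto

lemma cA_sum: "\<forall>i. 0 \<le> A$i \<Longrightarrow> x \<in> Rstar A \<Longrightarrow> (\<Sum>i\<in>UNIV. cA A x i * x$i) = SA A"
proof -
  assume A0: "\<forall>i. 0 \<le> A$i" and xR: "x \<in> Rstar A"
  have "cA A x i * x$i = A$i" for i
  proof (cases "A$i = 0")
    case False
    then have "0 < A$i" using A0 by (metis less_eq_real_def)
    then have "0 < x$i" using xR by (simp add: Rstar_def)
    then show ?thesis using False by (simp add: cA_def)
  qed (simp add: cA_def)
  then show ?thesis by (simp add: SA_def)
qed

lemma sum_xx: "(\<Sum>i\<in>UNIV. x$i * x$i) = x \<bullet> (x::real^'n)"
  by (simp add: inner_vec_def)

lemma LS_zeta:
  fixes A :: "real^'n"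
  assumes A0: "\<forall>i. 0 \<le> A$i" and xR: "x \<in> Rstar A" and x: "x \<noteq> 0"
  shows "LS A a b (zeta k) x = LSf A a b k x"
proof -
  let ?c = "ck k" and ?q = "x \<bullet> x" and ?P = "phiS A a b x" and ?W = "WW A a b x"
  let ?H1 = "h1 ?c ?q" and ?H2 = "h2 ?c ?q"
  have c: "?c \<noteq> 0" using ck_ge1[of k] by simp
  have q0: "0 < ?q" using x by simp
  define K1 where "K1 = ((2 - nS A a b) * alphaS A a b * ?q powr alphaS A a b / ?P + gS A a b) / ?q"
  have pd: "pderiv i (\<lambda>y. phiS A a b y powr (2 - nS A a b) * norm y powr (2 * (1 - alphaS A a b) - b * pS A a b)
        * xpow A y * pderiv i (zeta k) y) x
      = ?W * (2 * ?H1 + 4 * ?H2 * (x$i * x$i) + 2 * ?H1 * K1 * (x$i * x$i) + 2 * ?H1 * (cA A x i * x$i))" for i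
  proof -
    have fe: "(\<lambda>y. phiS A a b y powr (2 - nS A a b) * norm y powr (2 * (1 - alphaS A a b) - b * pS A a b)
        * xpow A y * pderiv i (zeta k) y) = (\<lambda>y. WW A a b y * (h1 ?c (y \<bullet> y) * (2 * y$i)))"
      by (rule ext) (simp add: pderiv_zeta0 WW_def gS_def)
    have D: "((\<lambda>y. WW A a b y * (h1 ?c (y \<bullet> y) * (2 * y$i))) has_derivative
       (\<lambda>h. ?W * (?H1 * (2 * h$i) + 2 * (x \<bullet> h) * ?H2 * (2 * x$i)) +
            ?W * (a1 A a b x h + a2 A a b x h + (\<Sum>j\<in>UNIV. cA A x j * h$j)) * (?H1 * (2 * x$i)))) (at x)"
      by (rule has_derivative_mult[OF WW_deriv[OF A0 xR x] V_deriv[OF c]])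
    have "pderiv i (\<lambda>y. WW A a b y * (h1 ?c (y \<bullet> y) * (2 * y$i))) x
       = ?W * (?H1 * (2 * axis i 1 $ i) + 2 * (x \<bullet> axis i 1) * ?H2 * (2 * x$i)) +
            ?W * (a1 A a b x (axis i 1) + a2 A a b x (axis i 1) + (\<Sum>j\<in>UNIV. cA A x j * axis i 1 $ j)) * (?H1 * (2 * x$i))"
      unfolding pderiv_def by (simp only: frechet_derivative_at[OF D, symmetric])
    also have "a1 A a b x (axis i 1) + a2 A a b x (axis i 1) = K1 * x$i"
      unfolding a1_def a2_def K1_def using q0 phi_ge(3)[of A a b x] by (simp add: inner_axis field_simps)
    also have "(\<Sum>j\<in>UNIV. cA A x j * axis i 1 $ j) = cA A x i" by (rule sum_axis)
    finally show ?thesis unfolding fe by (simp add: inner_axis algebra_simps)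
  qed
  have S: "(\<Sum>i\<in>UNIV. ?W * (2 * ?H1 + 4 * ?H2 * (x$i * x$i) + 2 * ?H1 * K1 * (x$i * x$i) + 2 * ?H1 * (cA A x i * x$i)))
      = ?W * (2 * ?H1 * real CARD('n) + 4 * ?H2 * ?q + 2 * ?H1 * K1 * ?q + 2 * ?H1 * SA A)"
    unfolding sum4[of "?W" "2 * ?H1" "4 * ?H2" "\<lambda>i. x$i * x$i" "2 * ?H1 * K1" "2 * ?H1" "\<lambda>i. cA A x i * x$i"]
    unfolding sum_xx cA_sum[OF A0 xR] by (simp add: mult_ac)
  have X0: "0 < xpow A x" by (rule xpow_pos[OF A0 xR])
  have P0: "0 < ?P" by (rule phi_ge(3))
  have pre: "?P powr nS A a b * norm x powr (b * pS A a b) / xpow A x * ?W = ?P^2 * (?q * norm x powr (-2 * alphaS A a b))"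
  proof -
    have "?P powr nS A a b * norm x powr (b * pS A a b) / xpow A x * ?W
        = (?P powr nS A a b * ?P powr (2 - nS A a b)) * (norm x powr (b * pS A a b) * norm x powr gS A a b)"
      unfolding WW_def using X0 by (simp add: field_simps)
    also have "?P powr nS A a b * ?P powr (2 - nS A a b) = ?P^2"
      using P0 by (simp add: powr_add[symmetric] powr_numeral)
    also have "norm x powr (b * pS A a b) * norm x powr gS A a b = norm x powr (2 * (1 - alphaS A a b))"
      by (simp add: powr_add[symmetric] gS_def)
    also have "\<dots> = ?q * norm x powr (-2 * alphaS A a b)" by (rule norm_powr_split[OF x])
    finally show ?thesis .
  qed
  have K1q: "K1 * ?q = (2 - nS A a b) * alphaS A a b * ?q powr alphaS A a b / ?P + gS A a b"
    unfolding K1_def using q0 by simp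
  have "LS A a b (zeta k) x = ?P powr nS A a b * norm x powr (b * pS A a b) / xpow A x
      * (?W * (2 * ?H1 * real CARD('n) + 4 * ?H2 * ?q + 2 * ?H1 * K1 * ?q + 2 * ?H1 * SA A))"
    unfolding LS_def pd S ..
  also have "\<dots> = (?P powr nS A a b * norm x powr (b * pS A a b) / xpow A x * ?W)
      * (2 * ?H1 * real CARD('n) + 4 * ?H2 * ?q + 2 * ?H1 * (K1 * ?q) + 2 * ?H1 * SA A)"
    by (simp add: mult_ac)
  also have "\<dots> = LSf A a b k x"
    unfolding pre K1q LSf_def ka_def by (simp add: algebra_simps power2_eq_square)
  finally show ?thesis .
qed

lemma F2_cont: "isCont F2 t"
proof -
  have p1: "pf (\<lambda>u. u * 1)" by (rule pf_mulu[OF pf_const])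
  have p: "pf (\<lambda>u. u * (u * (u * (u * 1) + (-2) * (u * 1))))"
    by (rule pf_mulu[OF pf_mulu[OF pf_add[OF pf_mulu[OF p1] pf_scale[OF p1]]]])
  have e: "(\<lambda>u::real. u * (u * (u * (u * 1) + (-2) * (u * 1)))) = (\<lambda>u. u*u*(u*u - 2*u))"
    by (rule ext) (simp add: algebra_simps)
  obtain p' where "\<And>u. ((\<lambda>u. u * (u * (u * (u * 1) + (-2) * (u * 1)))) has_real_derivative p' u) (at u)"
    using pf_deriv[OF p] by blast
  from Fm_deriv[OF p this] have "isCont (Fm (\<lambda>u. u * (u * (u * (u * 1) + (-2) * (u * 1))))) t"
    by (rule DERIV_isCont)
  then show ?thesis unfolding e F2_def .
qed

lemma meas_F0[measurable]: "F0 \<in> borel_measurable borel"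
  by (rule borel_measurable_continuous_onI[OF continuous_at_imp_continuous_on]) (simp add: F0_cont)
lemma meas_F1[measurable]: "F1 \<in> borel_measurable borel"
  by (rule borel_measurable_continuous_onI[OF continuous_at_imp_continuous_on]) (use F1_deriv DERIV_isCont in blast)
lemma meas_F2[measurable]: "F2 \<in> borel_measurable borel"
  by (rule borel_measurable_continuous_onI[OF continuous_at_imp_continuous_on]) (simp add: F2_cont)
lemma meas_h2[measurable]: "h2 (ck k) \<in> borel_measurable borel"
  unfolding h2_def[abs_def] by measurable

lemma meas_LSf[measurable]: "LSf A a b k \<in> borel_measurable borel"
  unfolding LSf_def[abs_def] ka_def[abs_def] by measurable

lemma LS_int_eq:
  assumes A0: "\<forall>i. 0 \<le> A$i"
  shows "(\<integral>\<^sup>+ x. ennreal ((LS A a b (zeta k) x)^2) \<partial>muS A a b) = (\<integral>\<^sup>+ x. ennreal (wS A a b x * (LSf A a b k x)^2) \<partial>lborel)"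
proof -
  have "(\<integral>\<^sup>+ x. ennreal ((LS A a b (zeta k) x)^2) \<partial>muS A a b) = (\<integral>\<^sup>+ x. ennreal ((LSf A a b k x)^2) \<partial>muS A a b)"
    by (rule nn_integral_cong_AE) (use AE_muS[of A a b] in \<open>eventually_elim, simp add: LS_zeta[OF A0]\<close>)
  also have "\<dots> = (\<integral>\<^sup>+ x. ennreal (wS A a b x * (LSf A a b k x)^2) \<partial>lborel)"
    by (rule muS_integral) measurable
  finally show ?thesis .
qed

definition KS :: "real^'n \<Rightarrow> real \<Rightarrow> real \<Rightarrow> real" where
  "KS A a b = \<bar>2 - nS A a b\<bar> * alphaS A a b * 2 + \<bar>gS A a b\<bar> + SA A"

definition CS :: "real^'n \<Rightarrow> real \<Rightarrow> real \<Rightarrow> real" where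
  "CS A a b = 18 * (KS A a b + real CARD('n)) + 1000"

lemma SA_nonneg: "\<forall>i. 0 \<le> A$i \<Longrightarrow> 0 \<le> SA A" unfolding SA_def by (simp add: sum_nonneg)

lemma ka_bound:
  assumes A0: "\<forall>i. 0 \<le> A$i" and al: "0 < alphaS A a b" and x: "x \<noteq> 0"
  shows "\<bar>ka A a b x\<bar> \<le> KS A a b"
proof -
  let ?P = "phiS A a b x" and ?Q = "(x \<bullet> x) powr alphaS A a b"
  have P0: "0 < ?P" by (rule phi_ge(3))
  have "?Q / 2 \<le> ?P" using phi_ge(2)[of x A a b] unfolding norm_q by simp
  then have Q2: "?Q / ?P \<le> 2" using P0 by (simp add: field_simps)
  have "\<bar>(2 - nS A a b) * alphaS A a b * ?Q / ?P\<bar> = \<bar>2 - nS A a b\<bar> * alphaS A a b * (?Q / ?P)"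
    using al P0 by (simp add: abs_mult)
  also have "\<dots> \<le> \<bar>2 - nS A a b\<bar> * alphaS A a b * 2"
    by (rule mult_left_mono[OF Q2]) (use al in simp)
  finally have t: "\<bar>(2 - nS A a b) * alphaS A a b * ?Q / ?P\<bar> \<le> \<bar>2 - nS A a b\<bar> * alphaS A a b * 2" .
  have "\<bar>ka A a b x\<bar> \<le> \<bar>(2 - nS A a b) * alphaS A a b * ?Q / ?P\<bar> + \<bar>gS A a b\<bar> + \<bar>SA A\<bar>"
    unfolding ka_def by linarith
  then show ?thesis using t SA_nonneg[OF A0] unfolding KS_def by linarith
qed

lemma LSf_bound:
  assumes A0: "\<forall>i. 0 \<le> A$i" and al: "0 < alphaS A a b" and x: "x \<noteq> (0::real^'n)"
  shows "(LSf A a b k x)^2 \<le> (CS A a b)^2 * (phiS A a b x powr 4 * norm x powr (-4 * alphaS A a b))"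
proof -
  let ?q = "x \<bullet> x"
  have q0: "0 < ?q" using x by simp
  have K0: "0 \<le> KS A a b" unfolding KS_def using al SA_nonneg[OF A0] by simp
  have kd: "\<bar>ka A a b x + real CARD('n)\<bar> \<le> KS A a b + real CARD('n)"
    using ka_bound[OF A0 al x] by linarith
  have t1: "\<bar>2 * (?q * h1 (ck k) ?q) * (ka A a b x + real CARD('n))\<bar> \<le> 2 * 9 * (KS A a b + real CARD('n))"
    using abs3[OF _ sh1_bound[OF ck_ge1 q0] kd, of 2 2] by simp
  have t2: "\<bar>4 * (?q^2 * h2 (ck k) ?q)\<bar> \<le> 4 * 250"
    using sh2_bound[OF ck_ge1 q0, of k] by (simp add: abs_mult mult.commute)
  have br: "\<bar>2 * (?q * h1 (ck k) ?q) * (ka A a b x + real CARD('n)) + 4 * (?q^2 * h2 (ck k) ?q)\<bar> \<le> CS A a b"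
    using t1 t2 unfolding CS_def by linarith
  let ?M = "(phiS A a b x)^2 * norm x powr (-2 * alphaS A a b)"
  have M0: "0 \<le> ?M" by simp
  have "\<bar>LSf A a b k x\<bar> = ?M * \<bar>2 * (?q * h1 (ck k) ?q) * (ka A a b x + real CARD('n)) + 4 * (?q^2 * h2 (ck k) ?q)\<bar>"
    unfolding LSf_def abs_mult by simp
  also have "\<dots> \<le> ?M * CS A a b" by (rule mult_left_mono[OF br M0])
  finally have "\<bar>LSf A a b k x\<bar> \<le> ?M * CS A a b" .
  then have "\<bar>LSf A a b k x\<bar>^2 \<le> (?M * CS A a b)^2" by (rule power_mono) simp
  also have "(?M * CS A a b)^2 = (CS A a b)^2 * (phiS A a b x powr 4 * norm x powr (-4 * alphaS A a b))"
  proof -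
    have P0: "0 < phiS A a b x" by (rule phi_ge(3))
    have "(phiS A a b x ^ 2)^2 = phiS A a b x powr 4" using P0 by (simp add: powr_numeral power_mult[symmetric])
    moreover have "(norm x powr (-2 * alphaS A a b))^2 = norm x powr (-4 * alphaS A a b)"
      using x by (simp add: powr_power[symmetric] power2_eq_square powr_add[symmetric])
    ultimately show ?thesis by (simp add: power_mult_distrib mult_ac)
  qed
  finally show ?thesis by simp
qed

lemma LS_bound_w:
  assumes A0: "\<forall>i. 0 \<le> A$i" and al: "0 < alphaS A a b"
  shows "wS A a b x * (LSf A a b k x)^2 \<le> (CS A a b)^2 * Bd A a b 4 x"
proof (cases "x = 0")
  case True then show ?thesis using Bd_nonneg[of A a b 4 x] by (simp add: wS_def)
next
  case False
  have "wS A a b x * (LSf A a b k x)^2 \<le> (phiS A a b x powr (- nS A a b) * norm x powr (SA A - b * pS A a b))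
      * ((CS A a b)^2 * (phiS A a b x powr 4 * norm x powr (-4 * alphaS A a b)))"
    by (rule mult_mono[OF wS_le[OF A0 False] LSf_bound[OF A0 al False]]) simp_all
  also have "\<dots> = (CS A a b)^2 * Bd A a b 4 x"
    unfolding Bd_def by (simp add: algebra_simps powr_add[symmetric])
  finally show ?thesis .
qed

lemma LS_lim: "(\<lambda>k. wS A a b x * (LSf A a b k x)^2) \<longlonglongrightarrow> 0"
proof (cases "x = 0")
  case True then show ?thesis by (simp add: wS_def)
next
  case False
  have q0: "0 < x \<bullet> x" using False by simp
  have "(\<lambda>k. LSf A a b k x) \<longlonglongrightarrow> (phiS A a b x)^2 * norm x powr (-2 * alphaS A a b) *
     (2 * 0 * (ka A a b x + real CARD('a)) + 4 * 0)"
    unfolding LSf_def using lims(2,3)[OF q0] by (intro tendsto_intros) auto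
  then have "(\<lambda>k. LSf A a b k x) \<longlonglongrightarrow> 0" by simp
  then have "(\<lambda>k. (LSf A a b k x)^2) \<longlonglongrightarrow> 0^2" by (intro tendsto_intros)
  then have "(\<lambda>k. (LSf A a b k x)^2) \<longlonglongrightarrow> 0" by simp
  then show ?thesis by (rule tendsto_mult_right_zero)
qed

lemma LS_conv:
  fixes A :: "real^'n"
  assumes d2: "CARD('n) \<ge> 2" and A0: "\<forall>i. 0 \<le> A$i" and c0: "0 \<le> b - a" and c1: "b - a < 1"
    and aD: "a < (DD A - 2) / 2" and n4: "4 < nS A a b"
  shows "(\<lambda>k. \<integral>\<^sup>+ x. ennreal ((LS A a b (zeta k) x)^2) \<partial>muS A a b) \<longlonglongrightarrow> 0"
proof -
  have n2: "2 < nS A a b" using n4 by simp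
  note P = params[OF d2 A0 c0 c1 aD n2]
  show ?thesis unfolding LS_int_eq[OF A0]
  proof (rule conv_lemma)
    show "(\<lambda>x. wS A a b x * (LSf A a b k x)^2) \<in> borel_measurable borel" for k by measurable
    show "0 \<le> wS A a b x * (LSf A a b k x)^2" for k x by (intro mult_nonneg_nonneg wS_nonneg zero_le_power2)
    show "(\<lambda>k. wS A a b x * (LSf A a b k x)^2) \<longlonglongrightarrow> 0" for x by (rule LS_lim)
    show "wS A a b x * (LSf A a b k x)^2 \<le> (CS A a b)^2 * Bd A a b 4 x" for k x
      by (rule LS_bound_w[OF A0 P(4)])
    show "integrable lborel (\<lambda>x. (CS A a b)^2 * Bd A a b 4 x)"
      by (intro Bochner_Integration.integrable_mult_right Bd_int[OF d2 A0 c0 c1 aD n2 n4])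
  qed
qed

theorem mainTheorem5:
  fixes A :: "real^'n" and a b :: real and j :: 'n
  assumes "CARD('n) \<ge> 2"
    and "\<forall>i. 0 \<le> A$i"
    and "A$j = 0"
    and "0 \<le> b - a" and "b - a < 1"
    and "a < (DD A - 2) / 2"
  shows "(nS A a b > 2 \<longrightarrow>
            H10 A a b (\<lambda>x. 1) \<and> (\<forall>x. GammaS A a b (\<lambda>x. 1) (\<lambda>x. 1) x = 0))
       \<and> (nS A a b > 4 \<longrightarrow>
            (\<exists>\<zeta>. (\<forall>k. \<zeta> k \<in> A0)
                \<and> (\<lambda>k. H1sq A a b (\<lambda>x. \<zeta> k x - 1)) \<longlonglongrightarrow> 0
                \<and> (\<lambda>k. \<integral>\<^sup>+ x. ennreal ((LS A a b (\<zeta> k) x)^2) \<partial>muS A a b) \<longlonglongrightarrow> 0))"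
proof (intro conjI impI)
  assume n2: "nS A a b > 2"
  show "H10 A a b (\<lambda>x. 1)" unfolding H10_def
    using zeta_A0 H1_conv[OF assms(1,2,4,5,6) n2] by blast
  show "\<forall>x. GammaS A a b (\<lambda>x. 1) (\<lambda>x. 1) x = 0" by (simp add: Gamma_one)
next
  assume n4: "nS A a b > 4"
  then have n2: "nS A a b > 2" by simp
  show "\<exists>\<zeta>. (\<forall>k. \<zeta> k \<in> A0)
                \<and> (\<lambda>k. H1sq A a b (\<lambda>x. \<zeta> k x - 1)) \<longlonglongrightarrow> 0
                \<and> (\<lambda>k. \<integral>\<^sup>+ x. ennreal ((LS A a b (\<zeta> k) x)^2) \<partial>muS A a b) \<longlonglongrightarrow> 0"
    using zeta_A0 H1_conv[OF assms(1,2,4,5,6) n2] LS_conv[OF assms(1,2,4,5,6) n4] by blast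
qed

end
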